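(* Let $\Omega\subset\mathbb{R}^d$ be a bounded domain, $n\ge1$, let $k_{ij}=k_{ji}>0$ for $i\ne j$, $k_{ii}=0$ ($i,j=0,\ldots,n$), and let $q_{ij}=r_{ij}$ be symmetric nonnegative constants. Let $(u_i,v_i)_{i=0,\ldots,n}$ be a smooth solution of $$\partial_tu_i+\operatorname{div}(u_iv_i)=0,$$ $$\sum_{j=0}^nk_{ij}u_iu_j(v_i-v_j)=-\Big(\nabla(u_iq_i(u))-u_i\sum_{j=0}^n\nabla(u_jq_j(u))\Big)+\Big(r_i(u)\nabla u_i-u_i\nabla r_i(u)-u_i\sum_{j=0}^n\big(r_j(u)\nabla u_j-u_j\nabla r_j(u)\big)\Big),$$ $i=0,\ldots,n$, with $q_i(u)=\sum_jq_{ij}u_j$, $r_i(u)=\sum_jr_{ij}u_j$, $\sum_{i=0}^nu_i=1$, $\sum_{i=0}^nu_iv_i=0$, and no-flux boundary conditions $u_iv_i\cdot\nu=0$ on $\partial\Omega$. Then, with $h_R(u)=\frac12\sum_{i,j=0}^nq_{ij}u_iu_j$, $$\frac{d}{dt}\int_\Omega h_R(u)dx+\frac14\sum_{i,j=0}^n\int_\Omega k_{ij}u_iu_j|v_i-v_j|^2dx=0.$$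
   Context: $u_i$ are volume fractions, $v_i$ velocities of the phases, $\nu$ the outer unit normal; $k_{ij}$ are drag coefficients, $q_{ij},r_{ij}$ pressure coefficients. *)

theory Defs
  imports "HOL-Analysis.Analysis"
begin

text \<open>C^k and C^infinity regularity on a set U (meant for open U), via iterated
  Frechet derivatives in all directions.\<close>
fun Ck_on :: "nat \<Rightarrow> 'a::real_normed_vector set \<Rightarrow> ('a \<Rightarrow> 'b::real_normed_vector) \<Rightarrow> bool" where
  "Ck_on 0 U f = continuous_on U f"
| "Ck_on (Suc m) U f = (f differentiable_on U \<and> continuous_on U f \<and>
      (\<forall>e. Ck_on m U (\<lambda>x. frechet_derivative f (at x) e)))"

definition smooth_on :: "'a::real_normed_vector set \<Rightarrow> ('a \<Rightarrow> 'b::real_normed_vector) \<Rightarrow> bool" where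
  "smooth_on U f \<longleftrightarrow> (\<forall>m. Ck_on m U f)"

definition grad :: "(real^'d \<Rightarrow> real) \<Rightarrow> real^'d \<Rightarrow> real^'d" where
  "grad f x = (\<chi> k. frechet_derivative f (at x) (axis k 1))"

definition divergence :: "(real^'d \<Rightarrow> real^'d) \<Rightarrow> real^'d \<Rightarrow> real" where
  "divergence F x = (\<Sum>k\<in>UNIV. frechet_derivative (\<lambda>y. F y $ k) (at x) (axis k 1))"

text \<open>Bounded domain with C^1 boundary given by a defining function phi
  (Omega = {phi < 0}, grad phi nonzero on the boundary); nu is its outer unit normal.\<close>
definition outer_unit_normal :: "(real^'d) set \<Rightarrow> (real^'d \<Rightarrow> real^'d) \<Rightarrow> bool" where
  "outer_unit_normal \<Omega> \<nu> \<longleftrightarrow> (\<exists>\<phi>. Ck_on 1 UNIV \<phi> \<and> \<Omega> = {x. \<phi> x < 0} \<and>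
      (\<forall>x\<in>frontier \<Omega>. grad \<phi> x \<noteq> 0 \<and> \<nu> x = (1 / norm (grad \<phi> x)) *\<^sub>R grad \<phi> x))"

end

theory Submission
  imports Defs
begin

lemma cont_integrable:
  fixes f :: "real^'d \<Rightarrow> real"
  assumes "continuous_on C f" "compact C" "S \<subseteq> C" "S \<in> sets lebesgue"
  shows "f integrable_on S"
proof -
  obtain B where B: "\<And>x. x \<in> C \<Longrightarrow> norm (f x) \<le> B"
    using compact_imp_bounded[OF compact_continuous_image[OF assms(1,2)]]
    unfolding bounded_iff by auto
  have lm: "S \<in> lmeasurable"
    using assms by (meson bounded_set_imp_lmeasurable bounded_subset compact_imp_bounded)
  show ?thesis
  proof (rule measurable_bounded_by_integrable_imp_integrable[where g="\<lambda>x. B"])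
    show "f \<in> borel_measurable (lebesgue_on S)"
      using assms by (meson continuous_imp_measurable_on_sets_lebesgue continuous_on_subset)
    show "(\<lambda>x. B) integrable_on S" using lm by (rule integrable_on_const)
  qed (use assms B in auto)
qed

lemma deriv_glue:
  fixes f p q :: "real \<Rightarrow> real"
  assumes "(p has_real_derivative D) (at x)" "(q has_real_derivative D) (at x)"
    and "eventually (\<lambda>y. f y = p y) (at_left x)" "eventually (\<lambda>y. f y = q y) (at_right x)"
    and "f x = p x" "f x = q x"
  shows "(f has_real_derivative D) (at x)"
proof -
  have l: "((\<lambda>y. (p y - p x) / (y - x)) \<longlongrightarrow> D) (at_left x)"
    using assms(1) unfolding has_field_derivative_iff
    by (rule tendsto_mono[rotated]) (simp add: at_le)
  have r: "((\<lambda>y. (q y - q x) / (y - x)) \<longlongrightarrow> D) (at_right x)"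
    using assms(2) unfolding has_field_derivative_iff
    by (rule tendsto_mono[rotated]) (simp add: at_le)
  have l': "((\<lambda>y. (f y - f x) / (y - x)) \<longlongrightarrow> D) (at_left x)"
    using l by (rule Lim_transform_eventually) (use assms(3,5) in \<open>auto elim: eventually_mono\<close>)
  have r': "((\<lambda>y. (f y - f x) / (y - x)) \<longlongrightarrow> D) (at_right x)"
    using r by (rule Lim_transform_eventually) (use assms(4,6) in \<open>auto elim: eventually_mono\<close>)
  show ?thesis unfolding has_field_derivative_iff
    by (subst at_eq_sup_left_right) (rule filterlim_sup[OF l' r'])
qed

definition clampc :: "real \<Rightarrow> real" where "clampc s = max (-1) (min 0 s)"
definition eta :: "real \<Rightarrow> real" where
  "eta s = 1 - 3 * (clampc s + 1)^2 + 2 * (clampc s + 1)^3"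
definition eta' :: "real \<Rightarrow> real" where
  "eta' s = 6 * (clampc s + 1) * clampc s"

lemma eta_poly_deriv:
  "((\<lambda>s. 1 - 3 * (s + 1)^2 + 2 * (s + 1)^3 :: real) has_real_derivative 6 * (s + 1) * s) (at s)"
  by (rule derivative_eq_intros refl | simp)+ (simp add: algebra_simps power2_eq_square)

lemma eta_deriv: "(eta has_real_derivative eta' s) (at s)"
proof -
  define p where "p = (\<lambda>s. 1 - 3 * (s + 1)^2 + 2 * (s + 1)^3 :: real)"
  have pd: "(p has_real_derivative 6 * (s + 1) * s) (at s)" for s
    unfolding p_def by (rule eta_poly_deriv)
  have c1: "((\<lambda>_. 1::real) has_real_derivative 0) (at s)" for s by (rule DERIV_const)
  have c0: "((\<lambda>_. 0::real) has_real_derivative 0) (at s)" for s by (rule DERIV_const)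
  consider "s < -1" | "s = -1" | "-1 < s \<and> s < 0" | "s = 0" | "s > 0" by linarith
  then show ?thesis
  proof cases
    case 1
    have ev: "eventually (\<lambda>y. eta y = 1) (at s)"
      using eventually_at_ball[of "-1 - s" s UNIV] 1
      by (auto simp: eta_def clampc_def dist_real_def elim!: eventually_mono)
    have "eta' s = 0" using 1 by (simp add: eta'_def clampc_def)
    then show ?thesis
      using deriv_glue[OF c1 c1, of eta s] ev 1
      by (auto simp: eta_def clampc_def eventually_at_split)
  next
    case 2
    have R: "eventually (\<lambda>y. eta y = p y) (at_right (-1))"
      apply (subst eventually_at_right[of "-1" "0::real"], simp)
      by (auto simp: eta_def clampc_def p_def intro!: exI[of _ 0])
    have L: "eventually (\<lambda>y. eta y = 1) (at_left (-1))"
      apply (subst eventually_at_left[of "-2" "-1::real"], simp)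
      by (auto simp: eta_def clampc_def intro!: exI[of _ "-2"])
    have "(eta has_real_derivative 0) (at (-1))"
      by (rule deriv_glue[where p="\<lambda>_. 1" and q=p]) (use L R pd[of "-1"] in \<open>auto simp: eta_def clampc_def p_def\<close>)
    then show ?thesis using 2 by (simp add: eta'_def clampc_def)
  next
    case 3
    have ev: "eventually (\<lambda>y. eta y = p y) (at s)"
      using eventually_at_ball[of "min (s+1) (-s)" s UNIV] 3
      by (auto simp: eta_def clampc_def dist_real_def p_def elim!: eventually_mono)
    have "(eta has_real_derivative 6 * (s + 1) * s) (at s)"
      by (rule deriv_glue[where p=p and q=p]) (use ev pd[of s] 3 in \<open>auto simp: eta_def clampc_def p_def eventually_at_split\<close>)
    then show ?thesis using 3 by (simp add: eta'_def clampc_def)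
  next
    case 4
    have L: "eventually (\<lambda>y. eta y = p y) (at_left 0)"
      apply (subst eventually_at_left[of "-1" "0::real"], simp)
      by (auto simp: eta_def clampc_def p_def intro!: exI[of _ "-1"])
    have R: "eventually (\<lambda>y. eta y = 0) (at_right 0)"
      apply (subst eventually_at_right[of "0" "1::real"], simp)
      by (auto simp: eta_def clampc_def intro!: exI[of _ 1])
    have "(eta has_real_derivative 0) (at 0)"
      by (rule deriv_glue[where p=p and q="\<lambda>_. 0"]) (use L R pd[of "0"] in \<open>auto simp: eta_def clampc_def p_def\<close>)
    then show ?thesis using 4 by (simp add: eta'_def clampc_def)
  next
    case 5
    have ev: "eventually (\<lambda>y. eta y = 0) (at s)"
      using eventually_at_ball[of "s" s UNIV] 5
      by (auto simp: eta_def clampc_def dist_real_def elim!: eventually_mono)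
    have "eta' s = 0" using 5 by (simp add: eta'_def clampc_def)
    then show ?thesis
      using deriv_glue[OF c0 c0, of eta s] ev 5
      by (auto simp: eta_def clampc_def eventually_at_split)
  qed
qed

lemma continuous_clampc: "continuous_on S clampc"
  unfolding clampc_def by (intro continuous_intros)
lemma continuous_eta: "continuous_on S eta"
  unfolding eta_def by (intro continuous_intros continuous_clampc)
lemma continuous_eta': "continuous_on S eta'"
  unfolding eta'_def by (intro continuous_intros continuous_clampc)
lemma eta_pos: "s \<ge> 0 \<Longrightarrow> eta s = 0" by (simp add: eta_def clampc_def)
lemma eta'_pos: "s \<ge> 0 \<Longrightarrow> eta' s = 0" by (simp add: eta'_def clampc_def)
lemma eta_neg: "s \<le> -1 \<Longrightarrow> eta s = 1" by (simp add: eta_def clampc_def)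
lemma eta'_neg: "s \<le> -1 \<Longrightarrow> eta' s = 0" by (simp add: eta'_def clampc_def)
lemma eta_bound: "\<bar>eta s\<bar> \<le> 1"
proof -
  have c: "-1 \<le> clampc s" "clampc s \<le> 0" by (auto simp: clampc_def)
  define c where "c = clampc s + 1"
  have "0 \<le> c" "c \<le> 1" using c by (auto simp: c_def)
  then have "0 \<le> c^2 * (3 - 2*c)" by (auto intro!: mult_nonneg_nonneg)
  moreover have "0 \<le> (1 - c)^2 * (1 + 2*c)" using \<open>0 \<le> c\<close> by (auto intro!: mult_nonneg_nonneg)
  then have "c^2 * (3 - 2*c) \<le> 1" by (simp add: algebra_simps power2_eq_square)
  ultimately have "0 \<le> c^2 * (3 - 2*c)" "c^2 * (3 - 2*c) \<le> 1" by auto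
  then show ?thesis unfolding eta_def c_def[symmetric] by (auto simp: algebra_simps power2_eq_square power3_eq_cube)
qed
lemma eta'_bound: "\<bar>eta' s\<bar> \<le> 3/2"
proof -
  have c: "-1 \<le> clampc s" "clampc s \<le> 0" by (auto simp: clampc_def)
  define c where "c = clampc s"
  have "0 \<le> (c + 1/2)^2" by simp
  moreover have "(c+1)*c \<le> 0" using c by (auto simp: c_def intro: mult_nonneg_nonpos)
  ultimately show ?thesis unfolding eta'_def c_def[symmetric]
    by (auto simp: abs_if algebra_simps power2_eq_square)
qed

lemma shift_has_integral:
  fixes f :: "real^'d \<Rightarrow> real"
  assumes "(f has_integral i) (cbox a b)" "\<And>x. x \<notin> cbox a b \<Longrightarrow> f x = 0"
  shows "((\<lambda>x. f (x + c)) has_integral i) UNIV"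
proof -
  have "((\<lambda>x. f (1 *\<^sub>R x + c)) has_integral (1 / (\<bar>1\<bar> ^ DIM(real^'d))) *\<^sub>R i)
      ((\<lambda>x. (1 / 1) *\<^sub>R x + -((1 / 1) *\<^sub>R c)) ` cbox a b)"
    by (rule has_integral_affinity[OF assms(1)]) simp
  then have *: "((\<lambda>x. f (x + c)) has_integral i) ((\<lambda>x. x - c) ` cbox a b)" by simp
  show ?thesis
  proof (rule has_integral_on_superset[OF *])
    fix x assume "x \<notin> (\<lambda>x. x - c) ` cbox a b"
    then have "x + c \<notin> cbox a b" by (metis add_diff_cancel image_eqI)
    then show "f (x + c) = 0" by (rule assms(2))
  qed simp
qed

lemma deriv_integral_zero:
  fixes f :: "real^'d \<Rightarrow> real" and f' :: "real^'d \<Rightarrow> real^'d \<Rightarrow> real"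
  assumes deriv: "\<And>x. (f has_derivative f' x) (at x)"
    and cont: "continuous_on UNIV (\<lambda>x. f' x e)"
    and K: "compact K" and supp: "\<And>x. x \<notin> K \<Longrightarrow> f x = 0"
  shows "((\<lambda>x. f' x e) has_integral 0) UNIV"
proof -
  define g where "g x = f' x e" for x
  have lin: "linear (f' x)" for x using deriv[of x] has_derivative_linear by blast
  have fcont: "continuous_on UNIV f"
    using deriv by (meson continuous_at_imp_continuous_on has_derivative_continuous)
  have g0: "g x = 0" if "x \<notin> K" for x
  proof -
    have "open (- K)" using K compact_imp_closed by blast
    then have "((\<lambda>_. 0::real) has_derivative f' x) (at x)"
      using that supp by (intro has_derivative_transform_within_open[OF deriv[of x], of "-K"]) auto
    then have "f' x = (\<lambda>_. 0)"
      using has_derivative_unique has_derivative_const by blast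
    then show ?thesis by (simp add: g_def)
  qed
  obtain R where R: "\<And>x. x \<in> K \<Longrightarrow> norm x \<le> R"
    using compact_imp_bounded[OF K] unfolding bounded_iff by auto
  obtain c where c: "cball (0::real^'d) (R + norm e) \<subseteq> cbox (-c) c"
    using bounded_subset_cbox_symmetric[of "cball (0::real^'d) (R + norm e)"] by auto
  define B where "B = cbox (-c) c"
  obtain M where M: "\<And>x. x \<in> B \<Longrightarrow> norm x \<le> M"
    using bounded_cbox[of "-c" c] unfolding bounded_iff B_def by auto
  have KB: "x \<in> B" if "x \<in> K" for x using R[OF that] c B_def
    by (smt (verit, best) mem_cball_0 subsetD norm_ge_zero)
  have shB: "x \<in> B" if "x + h *\<^sub>R e \<in> K" "\<bar>h\<bar> \<le> 1" for x h
  proof -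
    have "norm x \<le> norm (x + h *\<^sub>R e) + norm (h *\<^sub>R e)" by (metis add_diff_cancel norm_triangle_ineq4)
    also have "norm (h *\<^sub>R e) \<le> norm e" using that(2) by (simp add: mult_left_le_one_le)
    finally have "norm x \<le> R + norm e" using R[OF that(1)] by linarith
    then show ?thesis using c B_def by auto
  qed
  have fB: "f x = 0" if "x \<notin> B" for x using supp KB that by blast
  have gB: "g x = 0" if "x \<notin> B" for x using g0 KB that by blast
  have gcont: "continuous_on UNIV g" using cont by (simp add: g_def[abs_def])
  have fint: "f integrable_on B" unfolding B_def
    by (rule integrable_continuous) (rule continuous_on_subset[OF fcont], simp)
  then obtain i where fi: "(f has_integral i) B" by blast
  have fiU: "(f has_integral i) UNIV" by (rule has_integral_on_superset[OF fi]) (use fB in auto)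
  have gint: "g integrable_on B" unfolding B_def
    by (rule integrable_continuous) (rule continuous_on_subset[OF gcont], simp)
  then obtain I where gI: "(g has_integral I) B" by blast
  have gIU: "(g has_integral I) UNIV" by (rule has_integral_on_superset[OF gI]) (use gB in auto)
  have shift: "((\<lambda>x. f (x + c)) has_integral i) UNIV" for c
    using shift_has_integral[OF fi[unfolded B_def]] fB unfolding B_def by blast
  have bound: "\<bar>I\<bar> \<le> \<epsilon> * measure lborel B" if "\<epsilon> > 0" for \<epsilon>
  proof -
    define C where "C = cball (0::real^'d) (M + norm e)"
    have "uniformly_continuous_on C g"
      by (rule compact_uniformly_continuous) (auto simp: C_def intro: continuous_on_subset[OF gcont])
    then obtain \<delta> where \<delta>: "\<delta> > 0" "\<And>x y. x \<in> C \<Longrightarrow> y \<in> C \<Longrightarrow> dist y x < \<delta> \<Longrightarrow> dist (g y) (g x) < \<epsilon>"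
      unfolding uniformly_continuous_on_def using \<open>\<epsilon> > 0\<close> by metis
    define h where "h = min 1 (\<delta> / (2 * (norm e + 1)))"
    have "2*(norm e + 1) > 0" by (simp add: add_nonneg_pos)
    then have "\<delta> / (2 * (norm e + 1)) > 0" using \<delta>(1) by (rule divide_pos_pos[rotated])
    then have h: "h > 0" "h \<le> 1" by (auto simp: h_def)
    have "h * norm e < \<delta>"
    proof -
      have "h * norm e \<le> (\<delta> / (2 * (norm e + 1))) * norm e" unfolding h_def
        by (intro mult_right_mono) auto
      also have "\<dots> = \<delta> * (norm e / (2 * (norm e + 1)))" by simp
      also have "\<dots> < \<delta> * 1"
      proof (rule mult_strict_left_mono[OF _ \<delta>(1)])
        have "0 < 2 * (norm e + 1)" by (simp add: add_nonneg_pos)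
        then show "norm e / (2 * (norm e + 1)) < 1" by (simp add: divide_less_eq)
      qed
      also have "\<dots> = \<delta>" by simp
      finally show ?thesis .
    qed
    note hd = this
    define dq where "dq x = (f (x + h *\<^sub>R e) - f x) / h" for x
    have dqi: "(dq has_integral 0) UNIV"
    proof -
      have "((\<lambda>x. f (x + h *\<^sub>R e) - f x) has_integral (i - i)) UNIV"
        by (rule has_integral_diff[OF shift fiU])
      then have "((\<lambda>x. (f (x + h *\<^sub>R e) - f x) / h) has_integral (i - i) / h) UNIV"
        by (rule has_integral_divide)
      then show ?thesis by (simp add: dq_def[abs_def])
    qed
    have diff: "((\<lambda>x. dq x - g x) has_integral (0 - I)) UNIV" by (rule has_integral_diff[OF dqi gIU])
    have vanish: "dq x - g x = 0" if "x \<notin> B" for x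
    proof -
      have "\<bar>h\<bar> \<le> 1" using h by simp
      then have "x + h *\<^sub>R e \<notin> K" using shB[of x h] that by blast
      moreover have "x \<notin> K" using KB that by blast
      ultimately have "f x = 0" "f (x + h *\<^sub>R e) = 0" "g x = 0" using supp gB that by blast+
      then show ?thesis by (simp add: dq_def)
    qed
    have diffB: "((\<lambda>x. dq x - g x) has_integral (0 - I)) B"
    proof -
      have "(\<lambda>x. if x \<in> B then dq x - g x else 0) = (\<lambda>x. dq x - g x)" using vanish by force
      then show ?thesis using diff has_integral_restrict_UNIV[of B "\<lambda>x. dq x - g x" "0 - I"] by simp
    qed
    have pt: "norm (dq x - g x) \<le> \<epsilon>" if "x \<in> B" for x
    proof -
      define p where "p = (\<lambda>s. f (x + s *\<^sub>R e))"
      have pd: "(p has_real_derivative g (x + s *\<^sub>R e)) (at s)" for s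
      proof -
        have "((\<lambda>s. x + s *\<^sub>R e) has_derivative (\<lambda>s. s *\<^sub>R e)) (at s)"
          by (auto intro!: derivative_eq_intros)
        from has_derivative_compose[OF this deriv]
        have "(p has_derivative (\<lambda>s'. f' (x + s *\<^sub>R e) (s' *\<^sub>R e))) (at s)"
          by (simp add: p_def o_def)
        moreover have "(\<lambda>s'. f' (x + s *\<^sub>R e) (s' *\<^sub>R e)) = (*) (g (x + s *\<^sub>R e))"
          using linear_scale[OF lin] by (auto simp: g_def)
        ultimately show ?thesis by (simp add: has_field_derivative_def)
      qed
      obtain z where z: "0 < z" "z < h" "p h - p 0 = (h - 0) * g (x + z *\<^sub>R e)"
        using MVT2[of 0 h p "\<lambda>s. g (x + s *\<^sub>R e)"] pd h by auto
      have dqz: "dq x = g (x + z *\<^sub>R e)" using z h by (simp add: dq_def p_def field_simps)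
      have nx: "norm x \<le> M" using M that .
      have "norm (z *\<^sub>R e) \<le> h * norm e" using z by (simp add: mult_right_mono)
      moreover have "h * norm e \<le> norm e" using mult_left_le_one_le[of "norm e" h] h by simp
      ultimately have n2: "norm (z *\<^sub>R e) < \<delta>" "norm (z *\<^sub>R e) \<le> norm e"
        using hd by linarith+
      have "x \<in> C" unfolding C_def mem_cball_0 using nx norm_ge_zero[of e] by linarith
      moreover have "x + z *\<^sub>R e \<in> C" unfolding C_def mem_cball_0
        using nx n2 norm_triangle_ineq[of x "z *\<^sub>R e"] by linarith
      moreover have "dist (x + z *\<^sub>R e) x < \<delta>" using n2 by (simp add: dist_norm)
      ultimately have "dist (g (x + z *\<^sub>R e)) (g x) < \<epsilon>"
        by (rule \<delta>(2))
      then show ?thesis using dqz by (simp add: dist_norm)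
    qed
    have "norm (0 - I) \<le> \<epsilon> * measure lborel B"
      unfolding B_def by (rule has_integral_bound[OF _ diffB[unfolded B_def]]) (use pt \<open>\<epsilon> > 0\<close> in \<open>auto simp: B_def\<close>)
    then show ?thesis by simp
  qed
  have "I = 0"
  proof (rule ccontr)
    assume "I \<noteq> 0"
    define \<epsilon> where "\<epsilon> = \<bar>I\<bar> / (2 * (measure lborel B + 1))"
    have "\<epsilon> > 0" using \<open>I \<noteq> 0\<close> by (simp add: \<epsilon>_def add_nonneg_pos)
    from bound[OF this] have "\<bar>I\<bar> \<le> \<bar>I\<bar> * measure lborel B / (2 * (measure lborel B + 1))" by (simp add: \<epsilon>_def)
    moreover have "\<bar>I\<bar> * measure lborel B / (2 * (measure lborel B + 1)) < \<bar>I\<bar>"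
    proof -
      have p: "0 < 2 * (measure lborel B + 1)" by (simp add: add_nonneg_pos)
      have "measure lborel B / (2 * (measure lborel B + 1)) < 1" using p by (simp add: divide_less_eq)
      then have "\<bar>I\<bar> * (measure lborel B / (2 * (measure lborel B + 1))) < \<bar>I\<bar> * 1"
        using \<open>I \<noteq> 0\<close> by (intro mult_strict_left_mono) auto
      then show ?thesis by simp
    qed
    ultimately show False by linarith
  qed
  then show ?thesis using gIU by (simp add: g_def[abs_def])
qed

lemma shell_local:
  fixes \<phi> :: "real^'d \<Rightarrow> real" and D\<phi> :: "real^'d \<Rightarrow> real^'d \<Rightarrow> real"
  assumes deriv: "\<And>x. (\<phi> has_derivative D\<phi> x) (at x)"
    and w: "norm w = 1" and c: "c > 0" and r: "r > 0"
    and pos: "\<And>y. y \<in> ball x0 (2*r) \<Longrightarrow> D\<phi> y w \<ge> c"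
    and \<epsilon>: "0 < \<epsilon>" "\<epsilon> \<le> r * c / 2"
  shows "measure lebesgue ({x. -\<epsilon> < \<phi> x \<and> \<phi> x < 0} \<inter> ball x0 r)
          \<le> 2 * \<epsilon> * measure lebesgue (ball x0 (2*r)) / (r * c)"
proof -
  define A where "A = {x. -\<epsilon> < \<phi> x \<and> \<phi> x < 0} \<inter> ball x0 r"
  have lin: "linear (D\<phi> x)" for x using deriv[of x] has_derivative_linear by blast
  have \<phi>cont: "continuous_on UNIV \<phi>"
    using deriv by (meson continuous_at_imp_continuous_on has_derivative_continuous)
  have "open {x. -\<epsilon> < \<phi> x \<and> \<phi> x < 0}"
  proof -
    have "{x. -\<epsilon> < \<phi> x \<and> \<phi> x < 0} = \<phi> -` {-\<epsilon><..<0}" by auto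
    then show ?thesis using \<phi>cont by (simp add: open_vimage)
  qed
  then have Am: "A \<in> lmeasurable" unfolding A_def
    by (intro lmeasurable_open) (auto intro: bounded_subset[OF bounded_ball])
  define h where "h = \<epsilon> / c"
  have h: "h > 0" using \<epsilon> c by (simp add: h_def)
  define N where "N = nat \<lfloor>r / h\<rfloor>"
  have rh: "r / h \<ge> 2" using \<epsilon> c r by (simp add: h_def field_simps)
  have N1: "real N \<ge> r / h - 1" "real N \<le> r / h" using rh by (auto simp: N_def)
  have N2: "real N \<ge> r / (2*h)" using N1 rh by (simp add: field_simps)
  have Npos: "real N > 0" using N2 r h by (smt (verit) divide_pos_pos)
  have Nh: "real N * h \<le> r" using N1 h by (simp add: field_simps)
  define T where "T j = (+) ((real j * h) *\<^sub>R w) ` A" for j :: nat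
  have Tm: "T j \<in> lmeasurable" for j unfolding T_def by (rule measurable_translation[OF Am])
  have Tmeas: "measure lebesgue (T j) = measure lebesgue A" for j
    unfolding T_def by (rule measure_translation)
  have Tsub: "T j \<subseteq> ball x0 (2*r)" if "j < N" for j
  proof
    fix y assume "y \<in> T j"
    then obtain a where a: "a \<in> A" "y = (real j * h) *\<^sub>R w + a" unfolding T_def by auto
    have "real j * h < real N * h" using that h by simp
    then have jh: "real j * h < r" using Nh by linarith
    have "dist x0 y \<le> dist x0 a + norm ((real j * h) *\<^sub>R w)"
      using a(2) by (metis add.commute dist_norm dist_triangle2 norm_minus_commute add_diff_cancel_right' diff_add_eq_diff_diff_swap)
    also have "norm ((real j * h) *\<^sub>R w) = real j * h" using w h by simp
    finally show "y \<in> ball x0 (2*r)" using a(1) jh by (auto simp: A_def)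
  qed
  have key: "False" if "a \<in> A" "b \<in> A" "a = b + t *\<^sub>R w" "t \<ge> h" "t < r" for a b t
  proof -
    define q where "q = (\<lambda>s. \<phi> (b + s *\<^sub>R w))"
    have qd: "(q has_real_derivative D\<phi> (b + s *\<^sub>R w) w) (at s)" for s
    proof -
      have "((\<lambda>s. b + s *\<^sub>R w) has_derivative (\<lambda>s. s *\<^sub>R w)) (at s)"
        by (auto intro!: derivative_eq_intros)
      from has_derivative_compose[OF this deriv]
      have "(q has_derivative (\<lambda>s'. D\<phi> (b + s *\<^sub>R w) (s' *\<^sub>R w))) (at s)"
        by (simp add: q_def o_def)
      moreover have "(\<lambda>s'. D\<phi> (b + s *\<^sub>R w) (s' *\<^sub>R w)) = (*) (D\<phi> (b + s *\<^sub>R w) w)"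
        using linear_scale[OF lin] by (auto simp: mult.commute)
      ultimately show ?thesis by (simp add: has_field_derivative_def)
    qed
    have t0: "0 < t" using that h by linarith
    obtain z where z: "0 < z" "z < t" "q t - q 0 = (t - 0) * D\<phi> (b + z *\<^sub>R w) w"
      using MVT2[of 0 t q "\<lambda>s. D\<phi> (b + s *\<^sub>R w) w"] qd t0 by auto
    have "dist x0 (b + z *\<^sub>R w) \<le> dist x0 b + norm (z *\<^sub>R w)"
      by (metis dist_norm dist_triangle2 norm_minus_commute add_diff_cancel_left')
    also have "norm (z *\<^sub>R w) = z" using w z by simp
    finally have "b + z *\<^sub>R w \<in> ball x0 (2*r)" using that(2,5) z by (auto simp: A_def)
    then have "D\<phi> (b + z *\<^sub>R w) w \<ge> c" by (rule pos)
    then have "t * D\<phi> (b + z *\<^sub>R w) w \<ge> h * c" using t0 that(4) c h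
      by (meson less_le_not_le mult_mono)
    then have "\<phi> a - \<phi> b \<ge> \<epsilon>" using z that(3) c by (simp add: q_def h_def)
    moreover have "\<phi> a < 0" "\<phi> b > -\<epsilon>" using that(1,2) by (auto simp: A_def)
    ultimately show False by linarith
  qed
  have disj: "pairwise (\<lambda>i j. disjnt (T i) (T j)) {..<N}"
  proof (unfold pairwise_def, intro ballI impI)
    have *: "disjnt (T i) (T j)" if "i < j" "j < N" for i j
    proof (rule ccontr)
      assume "\<not> disjnt (T i) (T j)"
      then obtain y where "y \<in> T i" "y \<in> T j" unfolding disjnt_def by auto
      then obtain a b where ab: "a \<in> A" "b \<in> A" "y = (real i * h) *\<^sub>R w + a" "y = (real j * h) *\<^sub>R w + b"
        unfolding T_def by auto
      define t where "t = (real j - real i) * h"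
      have "a = b + t *\<^sub>R w" using ab(3,4) by (simp add: t_def algebra_simps)
      moreover have "t \<ge> h" using that h by (simp add: t_def)
      moreover have "t < r"
      proof -
        have "t \<le> real j * h" using h by (simp add: t_def algebra_simps)
        also have "\<dots> < real N * h" using that h by simp
        finally show ?thesis using Nh by linarith
      qed
      ultimately show False using key ab(1,2) by blast
    qed
    fix i j assume "i \<in> {..<N}" "j \<in> {..<N}" "i \<noteq> j"
    then show "disjnt (T i) (T j)" using *[of i j] *[of j i] disjnt_sym[of "T j" "T i"] by (cases "i < j") auto
  qed
  have "measure lebesgue (\<Union>j\<in>{..<N}. T j) = (\<Sum>j\<in>{..<N}. measure lebesgue (T j))"
    by (rule measure_UNION'[OF _ _ disj]) (use Tm in auto)
  also have "\<dots> = real N * measure lebesgue A" by (simp add: Tmeas)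
  finally have eq: "measure lebesgue (\<Union>j\<in>{..<N}. T j) = real N * measure lebesgue A" .
  have "measure lebesgue (\<Union>j\<in>{..<N}. T j) \<le> measure lebesgue (ball x0 (2*r))"
    by (rule measure_mono_fmeasurable) (use Tsub Tm in \<open>auto intro!: sets.finite_UN\<close>)
  then have le: "real N * measure lebesgue A \<le> measure lebesgue (ball x0 (2*r))" using eq by simp
  have "measure lebesgue A \<le> measure lebesgue (ball x0 (2*r)) / real N"
    using le Npos by (simp add: field_simps)
  also have "\<dots> \<le> measure lebesgue (ball x0 (2*r)) / (r / (2*h))"
    using N2 r h Npos by (intro divide_left_mono) (auto intro!: mult_pos_pos divide_pos_pos)
  also have "\<dots> = 2 * \<epsilon> * measure lebesgue (ball x0 (2*r)) / (r * c)"
    using c r by (simp add: h_def field_simps)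
  finally show ?thesis unfolding A_def .
qed

lemma shell_in_open:
  fixes \<phi> :: "real^'d \<Rightarrow> real"
  assumes \<Omega>: "\<Omega> = {x. \<phi> x < 0}" "bounded \<Omega>" "open \<Omega>"
    and cont: "continuous_on UNIV \<phi>" and W: "open W" "frontier \<Omega> \<subseteq> W"
  shows "\<exists>\<epsilon>0>0. \<forall>x. x \<in> \<Omega> \<and> \<phi> x > -\<epsilon>0 \<longrightarrow> x \<in> W"
proof -
  define C where "C = closure \<Omega> \<inter> (- W)"
  have "compact C" unfolding C_def using \<Omega> W
    by (intro compact_Int_closed) (auto simp: compact_closure)
  show ?thesis
  proof (cases "C = {}")
    case True
    then show ?thesis using closure_subset[of \<Omega>] by (auto simp: C_def intro!: exI[of _ 1])
  next
    case False
    then obtain x1 where x1: "x1 \<in> C" "\<And>y. y \<in> C \<Longrightarrow> \<phi> y \<le> \<phi> x1"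
      using continuous_attains_sup[OF \<open>compact C\<close> False continuous_on_subset[OF cont]] by auto
    have "x1 \<notin> frontier \<Omega>" using x1(1) W by (auto simp: C_def)
    then have "x1 \<in> \<Omega>" using x1(1) \<Omega>(3) by (auto simp: C_def frontier_def interior_open)
    then have "\<phi> x1 < 0" using \<Omega> by auto
    show ?thesis
    proof (intro exI[of _ "- \<phi> x1"] conjI allI impI)
      show "0 < - \<phi> x1" using \<open>\<phi> x1 < 0\<close> by simp
      fix x assume x: "x \<in> \<Omega> \<and> - (- \<phi> x1) < \<phi> x"
      show "x \<in> W"
      proof (rule ccontr)
        assume "x \<notin> W"
        then have "x \<in> C" using x closure_subset by (auto simp: C_def)
        then show False using x1(2)[of x] x by simp
      qed
    qed
  qed
qed

lemma shell_global:
  fixes \<phi> :: "real^'d \<Rightarrow> real" and D\<phi> :: "real^'d \<Rightarrow> real^'d \<Rightarrow> real"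
  assumes \<Omega>: "\<Omega> = {x. \<phi> x < 0}" "bounded \<Omega>" "open \<Omega>"
    and deriv: "\<And>x. (\<phi> has_derivative D\<phi> x) (at x)"
    and dcont: "\<And>e. continuous_on UNIV (\<lambda>x. D\<phi> x e)"
    and nz: "\<And>x. x \<in> frontier \<Omega> \<Longrightarrow> \<exists>k. D\<phi> x (axis k 1) \<noteq> 0"
  shows "\<exists>C \<epsilon>0. \<epsilon>0 > 0 \<and> (\<forall>\<epsilon>. 0 < \<epsilon> \<and> \<epsilon> \<le> \<epsilon>0 \<longrightarrow>
           measure lebesgue {x. -\<epsilon> < \<phi> x \<and> \<phi> x < 0} \<le> C * \<epsilon>)"
proof -
  have \<phi>cont: "continuous_on UNIV \<phi>"
    using deriv by (meson continuous_at_imp_continuous_on has_derivative_continuous)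
  have lin: "linear (D\<phi> x)" for x using deriv[of x] has_derivative_linear by blast
  have loc: "\<exists>r c w. r > 0 \<and> c > 0 \<and> norm w = 1 \<and> (\<forall>y\<in>ball x (2*r). D\<phi> y w \<ge> c)"
    if fx: "x \<in> frontier \<Omega>" for x
  proof -
    obtain k where k: "D\<phi> x (axis k 1) \<noteq> 0" using nz[OF fx] by blast
    define w where "w = sgn (D\<phi> x (axis k 1)) *\<^sub>R (axis k 1 :: real^'d)"
    have nw: "norm w = 1" using k by (simp add: w_def abs_sgn_eq)
    have "D\<phi> x w = sgn (D\<phi> x (axis k 1)) * D\<phi> x (axis k 1)"
      unfolding w_def using linear_scale[OF lin] by simp
    then have dw: "D\<phi> x w = \<bar>D\<phi> x (axis k 1)\<bar>" by (simp add: sgn_mult_self_eq abs_mult_sgn sgn_mult_abs mult.commute abs_sgn)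
    define c where "c = \<bar>D\<phi> x (axis k 1)\<bar> / 2"
    have c: "c > 0" using k by (simp add: c_def)
    have "isCont (\<lambda>y. D\<phi> y w) x" using dcont[of w] by (simp add: continuous_on_eq_continuous_at)
    then obtain \<rho> where \<rho>: "\<rho> > 0" "\<And>y. dist y x < \<rho> \<Longrightarrow> dist (D\<phi> y w) (D\<phi> x w) < c"
      unfolding continuous_at_eps_delta using c by metis
    have "\<forall>y\<in>ball x (2*(\<rho>/2)). D\<phi> y w \<ge> c"
    proof
      fix y assume "y \<in> ball x (2*(\<rho>/2))"
      then have "dist y x < \<rho>" by (simp add: dist_commute)
      then have "\<bar>D\<phi> y w - D\<phi> x w\<bar> < c" using \<rho>(2) by (simp add: dist_real_def)
      then show "D\<phi> y w \<ge> c" using dw unfolding c_def by linarith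
    qed
    then show ?thesis using \<rho> c nw by (intro exI[of _ "\<rho>/2"] exI[of _ c] exI[of _ w]) auto
  qed
  then obtain R Cc Wf where RCW: "\<And>x. x \<in> frontier \<Omega> \<Longrightarrow> R x > 0 \<and> Cc x > 0 \<and> norm (Wf x) = 1 \<and>
      (\<forall>y\<in>ball x (2 * R x). D\<phi> y (Wf x) \<ge> Cc x)"
    by metis
  have "compact (frontier \<Omega>)" using \<Omega>(2) by (rule compact_frontier_bounded)
  then obtain F where F: "F \<subseteq> frontier \<Omega>" "finite F" "frontier \<Omega> \<subseteq> (\<Union>x\<in>F. ball x (R x))"
    by (rule compactE_image[where f="\<lambda>x. ball x (R x)" and C="frontier \<Omega>"]) (use RCW in \<open>auto\<close>)
  obtain \<epsilon>1 where \<epsilon>1: "\<epsilon>1 > 0" "\<And>x. x \<in> \<Omega> \<Longrightarrow> \<phi> x > -\<epsilon>1 \<Longrightarrow> x \<in> (\<Union>x\<in>F. ball x (R x))"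
    using shell_in_open[OF \<Omega> \<phi>cont _ F(3)] by blast
  define \<epsilon>0 where "\<epsilon>0 = min \<epsilon>1 (Min (insert 1 ((\<lambda>x. R x * Cc x / 2) ` F)))"
  have \<epsilon>0: "\<epsilon>0 > 0" using \<epsilon>1 F RCW by (auto simp: \<epsilon>0_def)
  have \<epsilon>0F: "\<epsilon>0 \<le> R x * Cc x / 2" if "x \<in> F" for x
  proof -
    have "Min (insert 1 ((\<lambda>x. R x * Cc x / 2) ` F)) \<le> R x * Cc x / 2"
      using that F(2) by (intro Min_le) auto
    then show ?thesis unfolding \<epsilon>0_def by linarith
  qed
  define C where "C = (\<Sum>x\<in>F. 2 * measure lebesgue (ball x (2 * R x)) / (R x * Cc x))"
  have main: "measure lebesgue {x. -\<epsilon> < \<phi> x \<and> \<phi> x < 0} \<le> C * \<epsilon>" if \<epsilon>: "0 < \<epsilon> \<and> \<epsilon> \<le> \<epsilon>0" for \<epsilon>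
  proof -
    define S where "S = {x. -\<epsilon> < \<phi> x \<and> \<phi> x < 0}"
    have Sopen: "open S"
    proof -
      have "S = \<phi> -` {-\<epsilon><..<0}" by (auto simp: S_def)
      then show ?thesis using \<phi>cont by (simp add: open_vimage)
    qed
    have "S \<subseteq> (\<Union>x\<in>F. S \<inter> ball x (R x))"
    proof
      fix y assume y: "y \<in> S"
      then have "y \<in> \<Omega>" "\<phi> y > -\<epsilon>1" using \<epsilon> \<Omega>(1) by (auto simp: S_def \<epsilon>0_def)
      then show "y \<in> (\<Union>x\<in>F. S \<inter> ball x (R x))" using \<epsilon>1(2) y by blast
    qed
    moreover have Sb: "bounded S" using \<Omega> by (auto intro: bounded_subset simp: S_def)
    have Sm: "S \<inter> ball x (R x) \<in> lmeasurable" for x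
      using Sb Sopen by (intro lmeasurable_open) (auto intro: bounded_subset)
    have "(\<Union>x\<in>F. S \<inter> ball x (R x)) \<in> lmeasurable"
      using Sm F(2) by (intro fmeasurable.finite_UN) auto
    moreover have "S \<in> sets lebesgue" using Sb Sopen lmeasurable_open fmeasurableD by blast
    ultimately have "measure lebesgue S \<le> measure lebesgue (\<Union>x\<in>F. S \<inter> ball x (R x))"
      by (intro measure_mono_fmeasurable) auto
    also have "\<dots> \<le> (\<Sum>x\<in>F. measure lebesgue (S \<inter> ball x (R x)))"
      by (rule measure_UNION_le[OF F(2)]) (auto intro!: lmeasurable_open simp: Sopen)
    also have "\<dots> \<le> (\<Sum>x\<in>F. 2 * \<epsilon> * measure lebesgue (ball x (2 * R x)) / (R x * Cc x))"
    proof (rule sum_mono)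
      fix x assume x: "x \<in> F"
      then have xf: "x \<in> frontier \<Omega>" using F by auto
      show "measure lebesgue (S \<inter> ball x (R x)) \<le> 2 * \<epsilon> * measure lebesgue (ball x (2 * R x)) / (R x * Cc x)"
        unfolding S_def
        by (rule shell_local[OF deriv]) (use RCW[OF xf] \<epsilon> \<epsilon>0F[OF x] in auto)
    qed
    also have "\<dots> = C * \<epsilon>" unfolding C_def sum_distrib_right by (rule sum.cong) (simp_all add: algebra_simps)
    finally show ?thesis by (simp add: S_def)
  qed
  show ?thesis using main \<epsilon>0 by blast
qed

lemma lin_expand:
  fixes L :: "real^'d \<Rightarrow> real"
  assumes "linear L"
  shows "L w = (\<Sum>k\<in>UNIV. w $ k * L (axis k 1))"
proof -
  have "L w = L (\<Sum>k\<in>UNIV. w $ k *\<^sub>R axis k 1)"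
    using basis_expansion[of w] by (simp add: scalar_mult_eq_scaleR)
  also have "\<dots> = (\<Sum>k\<in>UNIV. w $ k * L (axis k 1))"
    by (simp add: linear_sum[OF assms] linear_scale[OF assms])
  finally show ?thesis .
qed

lemma div_zero:
  fixes \<phi> :: "real^'d \<Rightarrow> real" and D\<phi> :: "real^'d \<Rightarrow> real^'d \<Rightarrow> real"
    and G :: "real^'d \<Rightarrow> real^'d" and DG :: "real^'d \<Rightarrow> real^'d \<Rightarrow> real^'d"
  assumes \<Omega>: "\<Omega> = {x. \<phi> x < 0}" "bounded \<Omega>"
    and deriv: "\<And>x. (\<phi> has_derivative D\<phi> x) (at x)"
    and dcont: "\<And>e. continuous_on UNIV (\<lambda>x. D\<phi> x e)"
    and nz: "\<And>x. x \<in> frontier \<Omega> \<Longrightarrow> \<exists>k. D\<phi> x (axis k 1) \<noteq> 0"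
    and V: "open V" "closure \<Omega> \<subseteq> V"
    and Gd: "\<And>x. x \<in> V \<Longrightarrow> (G has_derivative DG x) (at x)"
    and DGc: "\<And>e. continuous_on V (\<lambda>x. DG x e)"
    and tang: "\<And>x. x \<in> frontier \<Omega> \<Longrightarrow> D\<phi> x (G x) = 0"
  shows "((\<lambda>x. \<Sum>k\<in>UNIV. DG x (axis k 1) $ k) has_integral 0) \<Omega>"
proof -
  have \<phi>cont: "continuous_on UNIV \<phi>"
    using deriv by (meson continuous_at_imp_continuous_on has_derivative_continuous)
  have lin: "linear (D\<phi> x)" for x using deriv[of x] has_derivative_linear by blast
  have \<Omega>open: "open \<Omega>"
  proof -
    have "\<Omega> = \<phi> -` {..<0}" using \<Omega> by auto
    then show ?thesis using \<phi>cont by (simp add: open_vimage)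
  qed
  have \<Omega>sub: "\<Omega> \<subseteq> V" using V closure_subset by blast
  have \<Omega>leb: "\<Omega> \<in> sets lebesgue" using \<Omega>open by simp
  have ccl: "compact (closure \<Omega>)" using \<Omega>(2) by (simp add: compact_closure)
  have notin: "\<phi> x \<ge> 0" if "x \<notin> \<Omega>" for x using that \<Omega> by auto
  have Gcont: "continuous_on V G"
    using Gd V(1) by (meson continuous_on_eq_continuous_at has_derivative_continuous)
  have Gk: "continuous_on V (\<lambda>x. G x $ k)" for k
    by (intro continuous_intros Gcont)
  define g where "g x = D\<phi> x (G x)" for x
  have g_exp: "g x = (\<Sum>k\<in>UNIV. G x $ k * D\<phi> x (axis k 1))" for x
    unfolding g_def by (rule lin_expand[OF lin])
  have gcont: "continuous_on V g"
    unfolding g_exp[abs_def]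
    by (intro continuous_intros Gk continuous_on_subset[OF dcont]) auto
  define dv where "dv x = (\<Sum>k\<in>UNIV. DG x (axis k 1) $ k)" for x
  have dvcont: "continuous_on V dv"
    unfolding dv_def[abs_def] by (intro continuous_intros DGc)
  define s where "s m = real (Suc m)" for m
  have spos: "s m > 0" for m by (simp add: s_def)
  define \<psi> where "\<psi> m x = eta (\<phi> x * s m)" for m x
  have ident: "((\<lambda>x. \<psi> m x * dv x + eta' (\<phi> x * s m) * s m * g x) has_integral 0) \<Omega>" for m
  proof -
    define f where "f k x = \<psi> m x * G x $ k" for k x
    define f' where "f' k x h = (if x \<in> V then \<psi> m x * (DG x h $ k) +
        eta' (\<phi> x * s m) * s m * D\<phi> x h * G x $ k else 0)" for k x h
    have zero_out: "f' k x h = 0" if "x \<notin> \<Omega>" for k x h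
      using notin[OF that] spos[of m] by (simp add: f'_def \<psi>_def eta_pos eta'_pos)
    have fzero: "f k x = 0" if "x \<notin> \<Omega>" for k x
      using notin[OF that] spos[of m] by (simp add: f_def \<psi>_def eta_pos)
    have \<psi>d: "(\<psi> m has_derivative (\<lambda>h. eta' (\<phi> x * s m) * (D\<phi> x h * s m))) (at x)" for x
    proof -
      have "((\<lambda>x. \<phi> x * s m) has_derivative (\<lambda>h. D\<phi> x h * s m)) (at x)"
        by (intro derivative_intros deriv)
      from has_derivative_compose[OF this eta_deriv[unfolded has_field_derivative_def]]
      show ?thesis by (simp add: \<psi>_def[abs_def] o_def)
    qed
    have fd: "(f k has_derivative f' k x) (at x)" for k x
    proof (cases "x \<in> V")
      case True
      have Gkd: "((\<lambda>x. G x $ k) has_derivative (\<lambda>h. DG x h $ k)) (at x)"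
        by (rule bounded_linear.has_derivative[OF bounded_linear_vec_nth Gd[OF True]])
      from has_derivative_mult[OF \<psi>d Gkd]
      have "(f k has_derivative (\<lambda>h. \<psi> m x * DG x h $ k + eta' (\<phi> x * s m) * (D\<phi> x h * s m) * G x $ k)) (at x)"
        by (simp add: f_def[abs_def])
      moreover have "(\<lambda>h. \<psi> m x * DG x h $ k + eta' (\<phi> x * s m) * (D\<phi> x h * s m) * G x $ k) = f' k x"
        using True by (auto simp: f'_def algebra_simps)
      ultimately show ?thesis by simp
    next
      case False
      then have xn: "x \<notin> closure \<Omega>" using V by auto
      have "((\<lambda>_. 0) has_derivative (\<lambda>_. 0)) (at x)" by simp
      then have "(f k has_derivative (\<lambda>_. 0)) (at x)"
        by (rule has_derivative_transform_within_open[of _ _ _ _ "- closure \<Omega>"])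
           (use xn fzero closure_subset in auto)
      moreover have "f' k x = (\<lambda>_. 0)" using False by (auto simp: f'_def)
      ultimately show ?thesis by simp
    qed
    have fcont: "continuous_on UNIV (\<lambda>x. f' k x e)" for k e
    proof -
      have "continuous_on V (\<lambda>x. f' k x e)"
      proof (rule continuous_on_eq)
        show "continuous_on V (\<lambda>x. \<psi> m x * (DG x e $ k) + eta' (\<phi> x * s m) * s m * D\<phi> x e * G x $ k)"
          unfolding \<psi>_def
          by (intro continuous_intros continuous_on_compose2[OF continuous_eta, of _ "\<lambda>x. \<phi> x * s m"]
              continuous_on_compose2[OF continuous_eta', of _ "\<lambda>x. \<phi> x * s m"]
              continuous_on_subset[OF \<phi>cont] continuous_on_subset[OF dcont] DGc Gk) auto
      qed (auto simp: f'_def)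
      moreover have "continuous_on (- closure \<Omega>) (\<lambda>x. f' k x e)"
      proof (rule continuous_on_eq[OF continuous_on_const[of _ 0]])
        fix x assume "x \<in> - closure \<Omega>"
        then have "x \<notin> \<Omega>" using closure_subset[of \<Omega>] by blast
        then show "0 = f' k x e" using zero_out by simp
      qed
      ultimately have "continuous_on (V \<union> - closure \<Omega>) (\<lambda>x. f' k x e)"
        using V by (intro continuous_on_open_Un) auto
      moreover have "V \<union> - closure \<Omega> = UNIV" using V by auto
      ultimately show ?thesis by simp
    qed
    have int0: "((\<lambda>x. f' k x (axis k 1)) has_integral 0) UNIV" for k
      by (rule deriv_integral_zero[OF fd fcont ccl]) (use fzero closure_subset in auto)
    have "((\<lambda>x. \<Sum>k\<in>UNIV. f' k x (axis k 1)) has_integral (\<Sum>k\<in>UNIV. 0)) UNIV"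
      using has_integral_sum[of UNIV "\<lambda>k x. f' k x (axis k 1)" "\<lambda>k. 0" UNIV] int0 by simp
    then have "((\<lambda>x. \<Sum>k\<in>UNIV. f' k x (axis k 1)) has_integral 0) UNIV" by simp
    then have "((\<lambda>x. \<Sum>k\<in>UNIV. f' k x (axis k 1)) has_integral 0) \<Omega>"
    proof -
      have "(\<lambda>x. if x \<in> \<Omega> then \<Sum>k\<in>UNIV. f' k x (axis k 1) else 0) = (\<lambda>x. \<Sum>k\<in>UNIV. f' k x (axis k 1))"
        using zero_out by (intro ext) simp
      then show ?thesis using \<open>((\<lambda>x. \<Sum>k\<in>UNIV. f' k x (axis k 1)) has_integral 0) UNIV\<close>
        has_integral_restrict_UNIV[of \<Omega> "\<lambda>x. \<Sum>k\<in>UNIV. f' k x (axis k 1)" 0] by simp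
    qed
    then show ?thesis
    proof (rule has_integral_eq[rotated])
      fix x assume x: "x \<in> \<Omega>"
      then have "x \<in> V" using \<Omega>sub by auto
      then have "(\<Sum>k\<in>UNIV. f' k x (axis k 1)) = (\<Sum>k\<in>UNIV. \<psi> m x * (DG x (axis k 1) $ k) + (eta' (\<phi> x * s m) * s m) * (G x $ k * D\<phi> x (axis k 1)))"
        by (intro sum.cong refl) (simp add: f'_def)
      also have "\<dots> = \<psi> m x * dv x + eta' (\<phi> x * s m) * s m * (\<Sum>k\<in>UNIV. G x $ k * D\<phi> x (axis k 1))"
        by (simp only: sum.distrib sum_distrib_left[symmetric] dv_def)
      finally have "(\<Sum>k\<in>UNIV. f' k x (axis k 1)) = \<psi> m x * dv x + eta' (\<phi> x * s m) * s m * (\<Sum>k\<in>UNIV. G x $ k * D\<phi> x (axis k 1))" .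
      then show "(\<Sum>k\<in>UNIV. f' k x (axis k 1)) = \<psi> m x * dv x + eta' (\<phi> x * s m) * s m * g x"
        by (simp add: g_exp)
    qed
  qed
  have \<psi>cont: "continuous_on UNIV (\<psi> m)" for m
    unfolding \<psi>_def[abs_def]
    by (intro continuous_on_compose2[OF continuous_eta, of _ "\<lambda>x. \<phi> x * s m"] continuous_intros \<phi>cont) auto
  have e'cont: "continuous_on UNIV (\<lambda>x. eta' (\<phi> x * s m))" for m
    by (intro continuous_on_compose2[OF continuous_eta', of _ "\<lambda>x. \<phi> x * s m"] continuous_intros \<phi>cont) auto
  have clV: "closure \<Omega> \<subseteq> V" using V by auto
  have intA: "(\<lambda>x. \<psi> m x * dv x) integrable_on \<Omega>" for m
    by (rule cont_integrable[OF _ ccl closure_subset \<Omega>leb])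
       (intro continuous_intros continuous_on_subset[OF \<psi>cont] continuous_on_subset[OF dvcont clV]; simp)
  have intB: "(\<lambda>x. eta' (\<phi> x * s m) * s m * g x) integrable_on \<Omega>" for m
    by (rule cont_integrable[OF _ ccl closure_subset \<Omega>leb])
       (intro continuous_intros continuous_on_subset[OF e'cont] continuous_on_subset[OF gcont clV]; simp)
  have dvint: "dv integrable_on \<Omega>"
    by (rule cont_integrable[OF continuous_on_subset[OF dvcont clV] ccl closure_subset \<Omega>leb])
  have absint: "(\<lambda>x. \<bar>dv x\<bar>) integrable_on \<Omega>"
    by (rule cont_integrable[OF _ ccl closure_subset \<Omega>leb])
       (intro continuous_intros continuous_on_subset[OF dvcont clV])
  define A where "A m = integral \<Omega> (\<lambda>x. \<psi> m x * dv x)" for m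
  define Bm where "Bm m = integral \<Omega> (\<lambda>x. eta' (\<phi> x * s m) * s m * g x)" for m
  have AB: "A m = - Bm m" for m
  proof -
    have "integral \<Omega> (\<lambda>x. \<psi> m x * dv x + eta' (\<phi> x * s m) * s m * g x) = 0"
      using ident[of m] by (rule integral_unique)
    then show ?thesis using integral_add[OF intA[of m] intB[of m]] by (simp add: A_def Bm_def)
  qed
  have Alim: "A \<longlonglongrightarrow> integral \<Omega> dv"
    unfolding A_def
  proof (rule dominated_convergence(2)[OF intA absint])
    fix m x assume "x \<in> \<Omega>"
    show "norm (\<psi> m x * dv x) \<le> \<bar>dv x\<bar>"
      using eta_bound[of "\<phi> x * s m"] by (simp add: \<psi>_def abs_mult mult_left_le_one_le)
  next
    fix x assume x: "x \<in> \<Omega>"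
    then have px: "\<phi> x < 0" using \<Omega> by auto
    define N where "N = nat \<lceil>- 1 / \<phi> x\<rceil>"
    have ev: "eventually (\<lambda>m. \<psi> m x * dv x = dv x) sequentially"
      unfolding eventually_sequentially
    proof (intro exI[of _ N] allI impI)
      fix m assume "N \<le> m"
      then have "real N \<le> real m" by simp
      moreover have "- 1 / \<phi> x \<le> real N" unfolding N_def by linarith
      ultimately have "- 1 / \<phi> x \<le> s m" by (simp add: s_def)
      then have "s m * \<phi> x \<le> (- 1 / \<phi> x) * \<phi> x" using px by (intro mult_right_mono_neg) auto
      then have "-1 \<ge> \<phi> x * s m" using px by (simp add: mult.commute)
      then show "\<psi> m x * dv x = dv x" by (simp add: \<psi>_def eta_neg)
    qed
    show "(\<lambda>m. \<psi> m x * dv x) \<longlonglongrightarrow> dv x"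
      by (rule Lim_transform_eventually[OF tendsto_const]) (use ev in \<open>auto elim: eventually_mono\<close>)
  qed
  obtain C0 \<epsilon>0 where C0: "\<epsilon>0 > 0" "\<And>\<epsilon>. 0 < \<epsilon> \<Longrightarrow> \<epsilon> \<le> \<epsilon>0 \<Longrightarrow>
      measure lebesgue {x. -\<epsilon> < \<phi> x \<and> \<phi> x < 0} \<le> C0 * \<epsilon>"
    using shell_global[OF \<Omega> \<Omega>open deriv dcont nz] by blast
  have Blim: "Bm \<longlonglongrightarrow> 0"
  proof (rule LIMSEQ_I)
    fix r :: real assume r: "r > 0"
    define \<delta> where "\<delta> = r / (2 * (3/2 * \<bar>C0\<bar> + 1))"
    have \<delta>: "\<delta> > 0" using r by (simp add: \<delta>_def add_nonneg_pos)
    define W where "W = g -` {-\<delta><..<\<delta>} \<inter> V"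
    have Wopen: "open W" using continuous_on_open_vimage[OF V(1), of g] gcont unfolding W_def by (meson open_greaterThanLessThan)
    have fW: "frontier \<Omega> \<subseteq> W"
    proof
      fix x assume x: "x \<in> frontier \<Omega>"
      then have "x \<in> V" using V frontier_def by auto
      moreover have "g x = 0" using tang[OF x] by (simp add: g_def)
      ultimately show "x \<in> W" using \<delta> by (simp add: W_def)
    qed
    obtain \<epsilon>1 where \<epsilon>1: "\<epsilon>1 > 0" "\<And>x. x \<in> \<Omega> \<Longrightarrow> \<phi> x > -\<epsilon>1 \<Longrightarrow> x \<in> W"
      using shell_in_open[OF \<Omega> \<Omega>open \<phi>cont Wopen fW] by blast
    define N where "N = nat \<lceil>1 / min \<epsilon>0 \<epsilon>1\<rceil>"
    show "\<exists>no. \<forall>n\<ge>no. norm (Bm n - 0) < r"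
    proof (intro exI[of _ N] allI impI)
      fix n assume "N \<le> n"
      have mpos: "min \<epsilon>0 \<epsilon>1 > 0" using C0 \<epsilon>1 by simp
      have "1 / min \<epsilon>0 \<epsilon>1 \<le> real N" unfolding N_def by linarith
      also have "\<dots> \<le> s n" using \<open>N \<le> n\<close> by (simp add: s_def)
      finally have le1: "1 / min \<epsilon>0 \<epsilon>1 \<le> s n" .
      have "inverse (s n) \<le> inverse (1 / min \<epsilon>0 \<epsilon>1)"
        by (rule le_imp_inverse_le[OF le1]) (use mpos in simp)
      then have "1 / s n \<le> min \<epsilon>0 \<epsilon>1" by (simp add: inverse_eq_divide)
      then have en: "1 / s n \<le> \<epsilon>0" "1 / s n \<le> \<epsilon>1" by auto
      define S where "S = {x. - (1 / s n) < \<phi> x \<and> \<phi> x < 0}"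
      have Sopen: "open S"
      proof -
        have "S = \<phi> -` {- (1 / s n)<..<0}" by (auto simp: S_def)
        then show ?thesis using \<phi>cont by (simp add: open_vimage)
      qed
      have SO: "S \<subseteq> \<Omega>" using \<Omega> by (auto simp: S_def)
      have Sm: "S \<in> lmeasurable"
        using Sopen SO \<Omega>(2) by (intro lmeasurable_open) (auto intro: bounded_subset)
      have measS: "measure lebesgue S \<le> C0 * (1 / s n)"
        unfolding S_def by (rule C0(2)) (use en spos[of n] in auto)
      define K where "K = 3/2 * s n * \<delta>"
      have K: "K \<ge> 0" using \<delta> spos[of n] by (simp add: K_def)
      have pt: "norm (eta' (\<phi> x * s n) * s n * g x) \<le> (if x \<in> S then K else 0)" if x: "x \<in> \<Omega>" for x
      proof (cases "x \<in> S")
        case True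
        then have "x \<in> W" using \<epsilon>1(2)[OF x] en(2) by (auto simp: S_def)
        then have "\<bar>g x\<bar> \<le> \<delta>" by (auto simp: W_def abs_le_iff)
        moreover have "\<bar>eta' (\<phi> x * s n)\<bar> * s n \<le> 3/2 * s n"
          using eta'_bound[of "\<phi> x * s n"] spos[of n] by (intro mult_right_mono) auto
        ultimately have "(\<bar>eta' (\<phi> x * s n)\<bar> * s n) * \<bar>g x\<bar> \<le> (3/2 * s n) * \<delta>"
          using spos[of n] by (intro mult_mono) auto
        then show ?thesis using True spos[of n] by (simp add: K_def abs_mult)
      next
        case False
        then have "\<phi> x \<le> - (1 / s n)" using x \<Omega> by (auto simp: S_def)
        then have "\<phi> x * s n \<le> -1" using spos[of n] by (simp add: field_simps)
        then show ?thesis using False by (simp add: eta'_neg)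
      qed
      have intK: "(\<lambda>x. if x \<in> S then K else 0) integrable_on \<Omega>"
        unfolding integrable_restrict_Int using Sm SO by (simp add: Int_absorb2 integrable_on_const)
      have "norm (Bm n) \<le> integral \<Omega> (\<lambda>x. if x \<in> S then K else 0)"
        unfolding Bm_def by (rule integral_norm_bound_integral[OF intB intK pt])
      also have "\<dots> = integral S (\<lambda>x. K)"
        using SO by (simp add: integral_restrict_Int Int_absorb2)
      also have "\<dots> = K * measure lebesgue S"
        using lmeasure_integral[OF Sm] by (simp add: integral_mult_right[symmetric] del: integral_mult_right)
      also have "\<dots> \<le> K * (C0 * (1 / s n))" using K measS by (rule mult_left_mono[rotated])
      also have "\<dots> = 3/2 * \<delta> * C0" using spos[of n] by (simp add: K_def)
      also have "\<dots> \<le> 3/2 * \<delta> * \<bar>C0\<bar>" using \<delta> by (intro mult_left_mono) auto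
      also have "\<dots> < r"
      proof -
        have "3/2 * \<delta> * \<bar>C0\<bar> = r * (3/2 * \<bar>C0\<bar>) / (2 * (3/2 * \<bar>C0\<bar> + 1))"
          by (simp add: \<delta>_def)
        also have "\<dots> = r * ((3/2 * \<bar>C0\<bar>) / (2 * (3/2 * \<bar>C0\<bar> + 1)))" by simp
        also have "\<dots> < r * 1"
        proof (rule mult_strict_left_mono[OF _ r])
          have "0 < 2 * (3/2 * \<bar>C0\<bar> + 1)" by (simp add: add_nonneg_pos)
          then show "(3/2 * \<bar>C0\<bar>) / (2 * (3/2 * \<bar>C0\<bar> + 1)) < 1" by (simp add: divide_less_eq)
        qed
        finally show ?thesis by simp
      qed
      finally show "norm (Bm n - 0) < r" by simp
    qed
  qed
  have "(\<lambda>m. - Bm m) \<longlonglongrightarrow> 0" using tendsto_minus[OF Blim] by simp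
  moreover have "A = (\<lambda>m. - Bm m)" using AB by (intro ext) simp
  ultimately have "A \<longlonglongrightarrow> 0" by simp
  with Alim have "integral \<Omega> dv = 0" using LIMSEQ_unique by blast
  then show ?thesis using dvint unfolding dv_def has_integral_integral by (metis dv_def)
qed

lemma deriv_under_integral:
  fixes F Ft :: "real \<Rightarrow> real^'d \<Rightarrow> real" and S K :: "(real^'d) set" and a b t :: real
  assumes SK: "S \<subseteq> K" and K: "compact K" and Sm: "S \<in> lmeasurable" and t: "a < t" "t < b"
    and d: "\<And>s x. s \<in> {a<..<b} \<Longrightarrow> x \<in> K \<Longrightarrow> ((\<lambda>s. F s x) has_real_derivative Ft s x) (at s)"
    and c: "continuous_on ({a<..<b} \<times> K) (\<lambda>(s,x). Ft s x)"
    and int: "\<And>s. s \<in> {a<..<b} \<Longrightarrow> F s integrable_on S"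
    and intt: "Ft t integrable_on S"
  shows "((\<lambda>s. integral S (F s)) has_real_derivative integral S (Ft t)) (at t)"
proof -
  define a' where "a' = (a + t) / 2"
  define b' where "b' = (t + b) / 2"
  have ab': "a < a'" "a' < t" "t < b'" "b' < b" using t by (auto simp: a'_def b'_def)
  define Kc where "Kc = {a'..b'} \<times> K"
  have Kcc: "compact Kc" unfolding Kc_def using K by (intro compact_Times) auto
  have "continuous_on Kc (\<lambda>(s,x). Ft s x)"
    by (rule continuous_on_subset[OF c]) (use ab' in \<open>auto simp: Kc_def\<close>)
  then have uc: "uniformly_continuous_on Kc (\<lambda>(s,x). Ft s x)"
    using Kcc compact_uniformly_continuous by blast
  show ?thesis unfolding has_field_derivative_iff LIM_eq
  proof (intro allI impI)
    fix r :: real assume r: "r > 0"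
    define \<eta> where "\<eta> = r / (2 * (measure lebesgue S + 1))"
    have mS: "measure lebesgue S \<ge> 0" by simp
    have \<eta>: "\<eta> > 0" using r mS by (simp add: \<eta>_def add_nonneg_pos)
    obtain \<delta> where \<delta>: "\<delta> > 0" "\<And>p q. p \<in> Kc \<Longrightarrow> q \<in> Kc \<Longrightarrow> dist q p < \<delta> \<Longrightarrow>
        dist ((\<lambda>(s,x). Ft s x) q) ((\<lambda>(s,x). Ft s x) p) < \<eta>"
      using uc \<eta> unfolding uniformly_continuous_on_def by metis
    define \<sigma> where "\<sigma> = min \<delta> (min (t - a') (b' - t))"
    have \<sigma>: "\<sigma> > 0" using \<delta> ab' by (simp add: \<sigma>_def)
    show "\<exists>s>0. \<forall>y. y \<noteq> t \<and> norm (y - t) < s \<longrightarrow>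
        norm ((integral S (F y) - integral S (F t)) / (y - t) - integral S (Ft t)) < r"
    proof (intro exI[of _ \<sigma>] conjI allI impI \<sigma>)
      fix y assume y: "y \<noteq> t \<and> norm (y - t) < \<sigma>"
      have yab: "y \<in> {a'..b'}" using y by (auto simp: \<sigma>_def abs_less_iff)
      have yin: "y \<in> {a<..<b}" "t \<in> {a<..<b}" using yab ab' by auto
      have pt: "norm ((F y x - F t x) / (y - t) - Ft t x) \<le> \<eta>" if x: "x \<in> S" for x
      proof -
        have xK: "x \<in> K" using x SK by auto
        have der: "\<And>s. s \<in> {a'..b'} \<Longrightarrow> ((\<lambda>s. F s x) has_real_derivative Ft s x) (at s)"
          using d xK ab' by auto
        obtain z where z: "z \<in> {a'..b'}" "\<bar>z - t\<bar> < \<bar>y - t\<bar>" "F y x - F t x = (y - t) * Ft z x"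
        proof (cases "t < y")
          case True
          obtain z where "t < z" "z < y" "F y x - F t x = (y - t) * Ft z x"
            using MVT2[of t y "\<lambda>s. F s x" "\<lambda>s. Ft s x"] True der yab ab' by force
          then show ?thesis using that[of z] yab ab' by auto
        next
          case False
          then have "y < t" using y by auto
          obtain z where "y < z" "z < t" "F t x - F y x = (t - y) * Ft z x"
            using MVT2[of y t "\<lambda>s. F s x" "\<lambda>s. Ft s x"] \<open>y < t\<close> der yab ab' by force
          then show ?thesis using that[of z] yab ab' by (auto simp: algebra_simps)
        qed
        have "(F y x - F t x) / (y - t) = Ft z x" using z(3) y by simp
        moreover have "dist (Ft z x) (Ft t x) < \<eta>"
        proof -
          have "(t, x) \<in> Kc" "(z, x) \<in> Kc" using z(1) xK ab' by (auto simp: Kc_def)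
          moreover have "dist (z, x) (t, x) < \<delta>"
            using z(2) y by (simp add: dist_Pair_Pair dist_real_def \<sigma>_def)
          ultimately show ?thesis using \<delta>(2) by fastforce
        qed
        ultimately show ?thesis by (simp add: dist_norm)
      qed
      have intq: "(\<lambda>x. (F y x - F t x) / (y - t) - Ft t x) integrable_on S"
        by (intro integrable_diff integrable_on_divide int yin intt)
      have "(integral S (F y) - integral S (F t)) / (y - t) - integral S (Ft t)
          = integral S (\<lambda>x. (F y x - F t x) / (y - t) - Ft t x)"
      proof -
        have i1: "(\<lambda>x. F y x - F t x) integrable_on S" using int[OF yin(1)] int[OF yin(2)] by (rule integrable_diff)
        have i2: "(\<lambda>x. (F y x - F t x) / (y - t)) integrable_on S" using i1 by (rule integrable_on_divide)
        have "integral S (\<lambda>x. (F y x - F t x) / (y - t) - Ft t x)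
            = integral S (\<lambda>x. (F y x - F t x) / (y - t)) - integral S (Ft t)"
          using integral_diff[OF i2 intt] by simp
        also have "integral S (\<lambda>x. (F y x - F t x) / (y - t)) = integral S (\<lambda>x. F y x - F t x) / (y - t)"
          by simp
        also have "integral S (\<lambda>x. F y x - F t x) = integral S (F y) - integral S (F t)"
          using integral_diff[OF int[OF yin(1)] int[OF yin(2)]] by simp
        finally show ?thesis by simp
      qed
      also have "norm \<dots> \<le> integral S (\<lambda>x. \<eta>)"
        by (rule integral_norm_bound_integral[OF intq integrable_on_const[OF Sm] pt])
      also have "\<dots> = \<eta> * measure lebesgue S"
        using lmeasure_integral[OF Sm] by (simp add: integral_mult_right[symmetric] del: integral_mult_right)
      also have "\<dots> < r"
      proof -
        have "\<eta> * measure lebesgue S = r * (measure lebesgue S / (2 * (measure lebesgue S + 1)))"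
          by (simp add: \<eta>_def)
        also have "\<dots> < r * 1"
        proof (rule mult_strict_left_mono[OF _ r])
          have "0 < 2 * (measure lebesgue S + 1)" using mS by (simp add: add_nonneg_pos)
          then show "measure lebesgue S / (2 * (measure lebesgue S + 1)) < 1" by (simp add: divide_less_eq)
        qed
        finally show ?thesis by simp
      qed
      finally show "norm ((integral S (F y) - integral S (F t)) / (y - t) - integral S (Ft t)) < r" .
    qed
  qed
qed

lemma smooth_C1:
  assumes "smooth_on U f" "open U"
  shows "\<And>p. p \<in> U \<Longrightarrow> (f has_derivative frechet_derivative f (at p)) (at p)"
    and "\<And>e. continuous_on U (\<lambda>p. frechet_derivative f (at p) e)"
    and "continuous_on U f"
proof -
  have C: "Ck_on (Suc 0) U f" using assms(1) unfolding smooth_on_def by blast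
  then have dif: "f differentiable_on U" and cf: "continuous_on U f"
    and ce: "\<And>e. continuous_on U (\<lambda>p. frechet_derivative f (at p) e)" by auto
  show "(f has_derivative frechet_derivative f (at p)) (at p)" if "p \<in> U" for p
    using dif that assms(2) by (simp add: differentiable_on_eq_differentiable_at frechet_derivative_works)
  show "continuous_on U (\<lambda>p. frechet_derivative f (at p) e)" for e by (rule ce)
  show "continuous_on U f" by (rule cf)
qed

lemma slice_x:
  assumes "(f has_derivative D) (at (t, x))"
  shows "((\<lambda>y. f (t, y)) has_derivative (\<lambda>h. D (0, h))) (at x)"
proof -
  have "((\<lambda>y. (t, y)) has_derivative (\<lambda>h. (0, h))) (at x)"
    by (auto intro!: derivative_eq_intros)
  from has_derivative_compose[OF this assms] show ?thesis by (simp add: o_def)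
qed

lemma slice_t:
  fixes f :: "real \<times> 'a::real_normed_vector \<Rightarrow> real"
  assumes "(f has_derivative D) (at (t, x))"
  shows "((\<lambda>s. f (s, x)) has_real_derivative D (1, 0)) (at t)"
proof -
  have "((\<lambda>s. (s, x)) has_derivative (\<lambda>h. (h, 0))) (at t)"
    by (auto intro!: derivative_eq_intros)
  from has_derivative_compose[OF this assms]
  have d: "((\<lambda>s. f (s, x)) has_derivative (\<lambda>h. D (h, 0))) (at t)" by (simp add: o_def)
  have lin: "linear D" using assms has_derivative_linear by blast
  have "(\<lambda>h. D (h, 0)) = (*) (D (1, 0))"
  proof
    fix h :: real
    have "D (h, 0) = D (h *\<^sub>R (1, 0))" by simp
    also have "\<dots> = h *\<^sub>R D (1, 0)" by (rule linear_scale[OF lin])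
    finally show "D (h, 0) = D (1, 0) * h" by simp
  qed
  with d show ?thesis by (simp add: has_field_derivative_def)
qed

lemma grad_eq:
  assumes "(f has_derivative f') (at x)"
  shows "grad f x = (\<chi> k. f' (axis k 1))"
  using frechet_derivative_at[OF assms] by (simp add: grad_def)

lemma div_eq:
  fixes F :: "real^'d \<Rightarrow> real^'d"
  assumes "(F has_derivative F') (at x)"
  shows "divergence F x = (\<Sum>k\<in>UNIV. F' (axis k 1) $ k)"
proof -
  have "((\<lambda>y. F y $ k) has_derivative (\<lambda>h. F' h $ k)) (at x)" for k
    by (rule bounded_linear.has_derivative[OF bounded_linear_vec_nth assms])
  from frechet_derivative_at[OF this] have "frechet_derivative (\<lambda>y. F y $ k) (at x) = (\<lambda>h. F' h $ k)" for k
    by metis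
  then show ?thesis by (simp add: divergence_def)
qed

lemma cont_slice:
  assumes "continuous_on U g" "\<And>x. x \<in> S \<Longrightarrow> (t, x) \<in> U"
  shows "continuous_on S (\<lambda>x. g (t, x))"
proof -
  have "continuous_on S (\<lambda>x. (t, x))" by (intro continuous_intros)
  then show ?thesis using continuous_on_compose2[OF assms(1), of S "\<lambda>x. (t, x)"] assms(2) by auto
qed

lemma rhs_simp:
  fixes Q g :: "nat \<Rightarrow> 'a::real_vector" and U qf :: "nat \<Rightarrow> real"
  shows "- ((U i *\<^sub>R Q i + qf i *\<^sub>R g i) - U i *\<^sub>R (\<Sum>j\<le>n. U j *\<^sub>R Q j + qf j *\<^sub>R g j))
         + ((qf i *\<^sub>R g i - U i *\<^sub>R Q i) - U i *\<^sub>R (\<Sum>j\<le>n. qf j *\<^sub>R g j - U j *\<^sub>R Q j))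
       = U i *\<^sub>R ((\<Sum>j\<le>n. U j *\<^sub>R Q j) - Q i) + U i *\<^sub>R ((\<Sum>j\<le>n. U j *\<^sub>R Q j) - Q i)"
proof -
  define S where "S = (\<Sum>j\<le>n. U j *\<^sub>R Q j)"
  define A where "A = (\<Sum>j\<le>n. qf j *\<^sub>R g j)"
  have 1: "(\<Sum>j\<le>n. U j *\<^sub>R Q j + qf j *\<^sub>R g j) = S + A" by (simp add: S_def A_def sum.distrib)
  have 2: "(\<Sum>j\<le>n. qf j *\<^sub>R g j - U j *\<^sub>R Q j) = A - S" by (simp add: S_def A_def sum_subtractf)
  show ?thesis unfolding 1 2 S_def[symmetric]
    by (simp add: algebra_simps)
qed

lemma energy_identity:
  fixes k :: "nat \<Rightarrow> nat \<Rightarrow> real" and U :: "nat \<Rightarrow> real" and V Q :: "nat \<Rightarrow> real^'d" and W :: "real^'d"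
  assumes k_sym: "\<And>i j. i \<le> n \<Longrightarrow> j \<le> n \<Longrightarrow> k i j = k j i"
    and flux: "(\<Sum>i\<le>n. U i *\<^sub>R V i) = 0"
    and mom: "\<And>i. i \<le> n \<Longrightarrow> (\<Sum>j\<le>n. (k i j * U i * U j) *\<^sub>R (V i - V j)) = U i *\<^sub>R (W - Q i) + U i *\<^sub>R (W - Q i)"
  shows "(\<Sum>i\<le>n. U i * (V i \<bullet> Q i)) = - (1/4) * (\<Sum>i\<le>n. \<Sum>j\<le>n. k i j * U i * U j * (norm (V i - V j))\<^sup>2)"
proof -
  define a where "a i j = k i j * U i * U j * (V i \<bullet> (V i - V j))" for i j
  have L: "(\<Sum>i\<le>n. V i \<bullet> (\<Sum>j\<le>n. (k i j * U i * U j) *\<^sub>R (V i - V j))) = (\<Sum>i\<le>n. \<Sum>j\<le>n. a i j)"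
    by (simp add: a_def inner_sum_right)
  have R: "(\<Sum>i\<le>n. V i \<bullet> (U i *\<^sub>R (W - Q i) + U i *\<^sub>R (W - Q i))) = - 2 * (\<Sum>i\<le>n. U i * (V i \<bullet> Q i))"
  proof -
    have "(\<Sum>i\<le>n. V i \<bullet> (U i *\<^sub>R (W - Q i) + U i *\<^sub>R (W - Q i)))
        = (\<Sum>i\<le>n. 2 * (U i * (V i \<bullet> W)) - 2 * (U i * (V i \<bullet> Q i)))"
      by (intro sum.cong refl) (simp only: inner_add_right inner_diff_right inner_scaleR_right, simp add: algebra_simps)
    also have "\<dots> = 2 * (\<Sum>i\<le>n. U i * (V i \<bullet> W)) - 2 * (\<Sum>i\<le>n. U i * (V i \<bullet> Q i))"
      by (simp only: sum_subtractf flip: sum_distrib_left)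
    also have "(\<Sum>i\<le>n. U i * (V i \<bullet> W)) = (\<Sum>i\<le>n. U i *\<^sub>R V i) \<bullet> W"
      by (simp add: inner_sum_left)
    finally show ?thesis using flux by simp
  qed
  have "(\<Sum>i\<le>n. V i \<bullet> (\<Sum>j\<le>n. (k i j * U i * U j) *\<^sub>R (V i - V j)))
      = (\<Sum>i\<le>n. V i \<bullet> (U i *\<^sub>R (W - Q i) + U i *\<^sub>R (W - Q i)))"
    by (intro sum.cong refl) (simp add: mom)
  then have eq1: "(\<Sum>i\<le>n. \<Sum>j\<le>n. a i j) = - 2 * (\<Sum>i\<le>n. U i * (V i \<bullet> Q i))"
    using L R by simp
  have sw: "(\<Sum>i\<le>n. \<Sum>j\<le>n. a i j) = (\<Sum>i\<le>n. \<Sum>j\<le>n. a j i)" by (rule sum.swap)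
  have pair: "a i j + a j i = k i j * U i * U j * (norm (V i - V j))\<^sup>2" if "i \<le> n" "j \<le> n" for i j
  proof -
    have "a i j + a j i = k i j * U i * U j * ((V i \<bullet> (V i - V j)) + (V j \<bullet> (V j - V i)))"
      using k_sym[OF that] by (simp add: a_def algebra_simps)
    also have "(V i \<bullet> (V i - V j)) + (V j \<bullet> (V j - V i)) = (V i - V j) \<bullet> (V i - V j)"
      by (simp add: inner_diff_left inner_diff_right inner_commute)
    finally show ?thesis by (simp add: power2_norm_eq_inner)
  qed
  have "2 * (\<Sum>i\<le>n. \<Sum>j\<le>n. a i j) = (\<Sum>i\<le>n. \<Sum>j\<le>n. a i j + a j i)"
    using sw by (simp add: sum.distrib)
  also have "\<dots> = (\<Sum>i\<le>n. \<Sum>j\<le>n. k i j * U i * U j * (norm (V i - V j))\<^sup>2)"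
    by (intro sum.cong refl) (simp add: pair)
  finally show ?thesis using eq1 by simp
qed

theorem lemma5:
  fixes \<Omega> :: "(real^'d) set" and \<nu> :: "real^'d \<Rightarrow> real^'d"
    and n :: nat and T :: real
    and k q r :: "nat \<Rightarrow> nat \<Rightarrow> real"
    and u :: "nat \<Rightarrow> real \<Rightarrow> real^'d \<Rightarrow> real"
    and v :: "nat \<Rightarrow> real \<Rightarrow> real^'d \<Rightarrow> real^'d"
    and U :: "(real \<times> (real^'d)) set"
  assumes dom: "open \<Omega>" "connected \<Omega>" "bounded \<Omega>" "\<Omega> \<noteq> {}"
    and normal: "outer_unit_normal \<Omega> \<nu>"
    and n: "n \<ge> 1" and T: "T > 0"
    and k_sym: "\<And>i j. i \<le> n \<Longrightarrow> j \<le> n \<Longrightarrow> k i j = k j i"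
    and k_pos: "\<And>i j. i \<le> n \<Longrightarrow> j \<le> n \<Longrightarrow> i \<noteq> j \<Longrightarrow> k i j > 0"
    and k_diag: "\<And>i. i \<le> n \<Longrightarrow> k i i = 0"
    and q_sym: "\<And>i j. i \<le> n \<Longrightarrow> j \<le> n \<Longrightarrow> q i j = q j i"
    and q_nonneg: "\<And>i j. i \<le> n \<Longrightarrow> j \<le> n \<Longrightarrow> q i j \<ge> 0"
    and r_eq_q: "\<And>i j. i \<le> n \<Longrightarrow> j \<le> n \<Longrightarrow> r i j = q i j"
    and U: "open U" "{0<..<T} \<times> closure \<Omega> \<subseteq> U"
    and smooth_u: "\<And>i. i \<le> n \<Longrightarrow> smooth_on U (\<lambda>(t, x). u i t x)"
    and smooth_v: "\<And>i. i \<le> n \<Longrightarrow> smooth_on U (\<lambda>(t, x). v i t x)"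
    and mass: "\<And>i t x. i \<le> n \<Longrightarrow> t \<in> {0<..<T} \<Longrightarrow> x \<in> \<Omega> \<Longrightarrow>
        deriv (\<lambda>s. u i s x) t + divergence (\<lambda>y. u i t y *\<^sub>R v i t y) x = 0"
    and momentum: "\<And>i t x. i \<le> n \<Longrightarrow> t \<in> {0<..<T} \<Longrightarrow> x \<in> \<Omega> \<Longrightarrow>
        (\<Sum>j\<le>n. (k i j * u i t x * u j t x) *\<^sub>R (v i t x - v j t x)) =
          - (grad (\<lambda>y. u i t y * (\<Sum>l\<le>n. q i l * u l t y)) x
             - u i t x *\<^sub>R (\<Sum>j\<le>n. grad (\<lambda>y. u j t y * (\<Sum>l\<le>n. q j l * u l t y)) x))
          + ((\<Sum>l\<le>n. r i l * u l t x) *\<^sub>R grad (u i t) x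
             - u i t x *\<^sub>R grad (\<lambda>y. \<Sum>l\<le>n. r i l * u l t y) x
             - u i t x *\<^sub>R (\<Sum>j\<le>n. (\<Sum>l\<le>n. r j l * u l t x) *\<^sub>R grad (u j t) x
                   - u j t x *\<^sub>R grad (\<lambda>y. \<Sum>l\<le>n. r j l * u l t y) x))"
    and sum_one: "\<And>t x. t \<in> {0<..<T} \<Longrightarrow> x \<in> \<Omega> \<Longrightarrow> (\<Sum>i\<le>n. u i t x) = 1"
    and sum_flux: "\<And>t x. t \<in> {0<..<T} \<Longrightarrow> x \<in> \<Omega> \<Longrightarrow> (\<Sum>i\<le>n. u i t x *\<^sub>R v i t x) = 0"
    and no_flux: "\<And>i t x. i \<le> n \<Longrightarrow> t \<in> {0<..<T} \<Longrightarrow> x \<in> frontier \<Omega> \<Longrightarrow>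
        (u i t x *\<^sub>R v i t x) \<bullet> \<nu> x = 0"
  shows "\<And>t. t \<in> {0<..<T} \<Longrightarrow>
    ((\<lambda>s. integral \<Omega> (\<lambda>x. (1/2) * (\<Sum>i\<le>n. \<Sum>j\<le>n. q i j * u i s x * u j s x)))
      has_real_derivative
      (- (1/4) * (\<Sum>i\<le>n. \<Sum>j\<le>n. integral \<Omega> (\<lambda>x. k i j * u i t x * u j t x * (norm (v i t x - v j t x))\<^sup>2)))) (at t)"
proof -
  fix t assume t: "t \<in> {0<..<T}"
  define fu where "fu i = (\<lambda>(t, x). u i t x)" for i
  define fv where "fv i = (\<lambda>(t, x). v i t x)" for i
  define Du where "Du i p = frechet_derivative (fu i) (at p)" for i p
  define Dv where "Dv i p = frechet_derivative (fv i) (at p)" for i p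
  have su: "smooth_on U (fu i)" if "i \<le> n" for i using smooth_u[OF that] by (simp add: fu_def)
  have sv: "smooth_on U (fv i)" if "i \<le> n" for i using smooth_v[OF that] by (simp add: fv_def)
  have uD: "(fu i has_derivative Du i p) (at p)" if "i \<le> n" "p \<in> U" for i p
    using smooth_C1(1)[OF su[OF that(1)] U(1) that(2)] by (simp add: Du_def)
  have vD: "(fv i has_derivative Dv i p) (at p)" if "i \<le> n" "p \<in> U" for i p
    using smooth_C1(1)[OF sv[OF that(1)] U(1) that(2)] by (simp add: Dv_def)
  have uDc: "continuous_on U (\<lambda>p. Du i p e)" if "i \<le> n" for i e
    using smooth_C1(2)[OF su[OF that] U(1)] by (simp add: Du_def)
  have vDc: "continuous_on U (\<lambda>p. Dv i p e)" if "i \<le> n" for i e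
    using smooth_C1(2)[OF sv[OF that] U(1)] by (simp add: Dv_def)
  have uc: "continuous_on U (fu i)" if "i \<le> n" for i using smooth_C1(3)[OF su[OF that] U(1)] .
  have vc: "continuous_on U (fv i)" if "i \<le> n" for i using smooth_C1(3)[OF sv[OF that] U(1)] .
  define Ux where "Ux = {x. (t, x) \<in> U}"
  have Ux_open: "open Ux"
  proof -
    have "Ux = (\<lambda>x. (t, x)) -` U" by (auto simp: Ux_def)
    moreover have "continuous_on UNIV (\<lambda>x::real^'d. (t, x))" by (intro continuous_intros)
    ultimately show ?thesis using U(1) by (simp add: open_vimage)
  qed
  have clU: "closure \<Omega> \<subseteq> Ux" using U(2) t by (auto simp: Ux_def)
  have \<Omega>U: "\<Omega> \<subseteq> Ux" using clU closure_subset by blast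
  have inU: "(t, x) \<in> U" if "x \<in> Ux" for x using that by (simp add: Ux_def)
  define du where "du i x h = Du i (t, x) (0, h)" for i x h
  define dvv where "dvv i x h = Dv i (t, x) (0, h)" for i x h
  have uxd: "(u i t has_derivative du i x) (at x)" if "i \<le> n" "x \<in> Ux" for i x
    using slice_x[OF uD[OF that(1) inU[OF that(2)]]] by (simp add: fu_def du_def[abs_def])
  have vxd: "(v i t has_derivative dvv i x) (at x)" if "i \<le> n" "x \<in> Ux" for i x
    using slice_x[OF vD[OF that(1) inU[OF that(2)]]] by (simp add: fv_def dvv_def[abs_def])
  have duc: "continuous_on Ux (\<lambda>x. du i x e)" if "i \<le> n" for i e
    unfolding du_def by (rule cont_slice[OF uDc[OF that]]) (simp add: inU)
  have dvc: "continuous_on Ux (\<lambda>x. dvv i x e)" if "i \<le> n" for i e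
    unfolding dvv_def by (rule cont_slice[OF vDc[OF that]]) (simp add: inU)
  have uxc: "continuous_on Ux (u i t)" if "i \<le> n" for i
    using cont_slice[OF uc[OF that], of Ux t] inU by (simp add: fu_def)
  have vxc: "continuous_on Ux (v i t)" if "i \<le> n" for i
    using cont_slice[OF vc[OF that], of Ux t] inU by (simp add: fv_def)
  have ut: "((\<lambda>s. u i s x) has_real_derivative Du i (s, x) (1, 0)) (at s)"
    if "i \<le> n" "(s, x) \<in> U" for i s x
    using slice_t[OF uD[OF that]] by (simp add: fu_def)
  show "((\<lambda>s. integral \<Omega> (\<lambda>x. (1/2) * (\<Sum>i\<le>n. \<Sum>j\<le>n. q i j * u i s x * u j s x)))
      has_real_derivative
      (- (1/4) * (\<Sum>i\<le>n. \<Sum>j\<le>n. integral \<Omega> (\<lambda>x. k i j * u i t x * u j t x * (norm (v i t x - v j t x))\<^sup>2)))) (at t)"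
  proof -
  define F where "F s x = (1/2) * (\<Sum>i\<le>n. \<Sum>j\<le>n. q i j * u i s x * u j s x)" for s x
  define Ftp where "Ftp p = (1/2) * (\<Sum>i\<le>n. \<Sum>j\<le>n. q i j * (Du i p (1,0) * fu j p + fu i p * Du j p (1,0)))" for p
  define Ft where "Ft s x = Ftp (s, x)" for s x
  have Fd: "((\<lambda>s. F s x) has_real_derivative Ft s x) (at s)" if "s \<in> {0<..<T}" "x \<in> closure \<Omega>" for s x
  proof -
    have sx: "(s, x) \<in> U" using U(2) that by auto
    have tm: "((\<lambda>s. q i j * u i s x * u j s x) has_real_derivative
        q i j * (Du i (s,x) (1,0) * fu j (s,x) + fu i (s,x) * Du j (s,x) (1,0))) (at s)"
      if "i \<le> n" "j \<le> n" for i j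
    proof -
      from DERIV_mult[OF DERIV_cmult[OF ut[OF that(1) sx], of "q i j"] ut[OF that(2) sx]]
      show ?thesis by (rule DERIV_cong) (simp add: fu_def algebra_simps)
    qed
    have "((\<lambda>s. \<Sum>i\<le>n. \<Sum>j\<le>n. q i j * u i s x * u j s x) has_real_derivative
        (\<Sum>i\<le>n. \<Sum>j\<le>n. q i j * (Du i (s,x) (1,0) * fu j (s,x) + fu i (s,x) * Du j (s,x) (1,0)))) (at s)"
      by (intro DERIV_sum tm) auto
    from DERIV_cmult[OF this, of "1/2"] show ?thesis unfolding F_def Ft_def Ftp_def .
  qed
  have Ftpc: "continuous_on U Ftp"
    unfolding Ftp_def by (intro continuous_intros uDc uc) auto
  have "(\<lambda>(s, x). Ft s x) = Ftp" by (auto simp: Ft_def fun_eq_iff)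
  then have Fcont: "continuous_on ({0<..<T} \<times> closure \<Omega>) (\<lambda>(s, x). Ft s x)"
    using continuous_on_subset[OF Ftpc U(2)] by simp
  have usc: "continuous_on (closure \<Omega>) (u i s)" if "i \<le> n" "s \<in> {0<..<T}" for i s
  proof -
    have "(s, x) \<in> U" if "x \<in> closure \<Omega>" for x using U(2) \<open>s \<in> {0<..<T}\<close> that by blast
    then show ?thesis using cont_slice[OF uc[OF that(1)], of "closure \<Omega>" s] by (simp add: fu_def)
  qed
  have \<Omega>leb: "\<Omega> \<in> sets lebesgue" using dom(1) by simp
  have \<Omega>m: "\<Omega> \<in> lmeasurable" using lmeasurable_open[OF dom(3) dom(1)] .
  have ccl: "compact (closure \<Omega>)" using dom(3) by (simp add: compact_closure)
  have Fint: "F s integrable_on \<Omega>" if "s \<in> {0<..<T}" for s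
  proof (rule cont_integrable[OF _ ccl closure_subset \<Omega>leb])
    show "continuous_on (closure \<Omega>) (F s)"
      unfolding F_def[abs_def] by (intro continuous_intros usc that) auto
  qed
  have Ftint: "Ft t integrable_on \<Omega>"
  proof (rule cont_integrable[OF _ ccl closure_subset \<Omega>leb])
    show "continuous_on (closure \<Omega>) (Ft t)"
      unfolding Ft_def[abs_def] by (rule cont_slice[OF Ftpc]) (use clU in \<open>auto simp: Ux_def\<close>)
  qed
  have D: "((\<lambda>s. integral \<Omega> (F s)) has_real_derivative integral \<Omega> (Ft t)) (at t)"
    by (rule deriv_under_integral[OF closure_subset ccl \<Omega>m _ _ Fd Fcont Fint Ftint]) (use t in auto)
  obtain \<phi> where \<phi>: "Ck_on 1 UNIV \<phi>" "\<Omega> = {x. \<phi> x < 0}"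
      "\<And>x. x \<in> frontier \<Omega> \<Longrightarrow> grad \<phi> x \<noteq> 0 \<and> \<nu> x = (1 / norm (grad \<phi> x)) *\<^sub>R grad \<phi> x"
    using normal unfolding outer_unit_normal_def by blast
  define D\<phi> where "D\<phi> x = frechet_derivative \<phi> (at x)" for x
  have \<phi>C: "\<phi> differentiable_on UNIV" "\<And>e. continuous_on UNIV (\<lambda>x. frechet_derivative \<phi> (at x) e)"
    using \<phi>(1) by (auto simp: One_nat_def)
  have \<phi>d: "(\<phi> has_derivative D\<phi> x) (at x)" for x
    using \<phi>C(1) by (simp add: differentiable_on_eq_differentiable_at frechet_derivative_works D\<phi>_def)
  have \<phi>dc: "continuous_on UNIV (\<lambda>x. D\<phi> x e)" for e using \<phi>C(2) by (simp add: D\<phi>_def)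
  have \<phi>lin: "linear (D\<phi> x)" for x using \<phi>d[of x] has_derivative_linear by blast
  have gradD: "grad \<phi> x $ k = D\<phi> x (axis k 1)" for x k by (simp add: grad_def D\<phi>_def)
  have Dinner: "D\<phi> x w = grad \<phi> x \<bullet> w" for x w
    by (subst lin_expand[OF \<phi>lin]) (simp add: inner_vec_def gradD mult.commute)
  have nz: "\<exists>k. D\<phi> x (axis k 1) \<noteq> 0" if "x \<in> frontier \<Omega>" for x
  proof (rule ccontr)
    assume "\<not> (\<exists>k. D\<phi> x (axis k 1) \<noteq> 0)"
    then have "grad \<phi> x = 0" by (simp add: vec_eq_iff gradD)
    then show False using \<phi>(3)[OF that] by simp
  qed
  define qf where "qf i y = (\<Sum>l\<le>n. q i l * u l t y)" for i y
  define G where "G y = (\<Sum>i\<le>n. qf i y *\<^sub>R (u i t y *\<^sub>R v i t y))" for y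
  define DG where "DG y h = (\<Sum>i\<le>n. qf i y *\<^sub>R (u i t y *\<^sub>R dvv i y h + du i y h *\<^sub>R v i t y)
      + (\<Sum>l\<le>n. q i l * du l y h) *\<^sub>R (u i t y *\<^sub>R v i t y))" for y h
  have qfd: "(qf i has_derivative (\<lambda>h. \<Sum>l\<le>n. q i l * du l x h)) (at x)" if "x \<in> Ux" for i x
    unfolding qf_def[abs_def] by (intro has_derivative_sum has_derivative_mult_right uxd that) auto
  have Gd: "(G has_derivative DG x) (at x)" if "x \<in> Ux" for x
    unfolding G_def[abs_def] DG_def
    by (intro has_derivative_sum has_derivative_scaleR qfd uxd vxd that) auto
  have DGc: "continuous_on Ux (\<lambda>x. DG x e)" for e
    unfolding DG_def qf_def by (intro continuous_intros uxc vxc duc dvc) auto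
  have tang: "D\<phi> x (G x) = 0" if x: "x \<in> frontier \<Omega>" for x
  proof -
    have "D\<phi> x (G x) = (\<Sum>i\<le>n. qf i x * D\<phi> x (u i t x *\<^sub>R v i t x))"
      unfolding G_def by (simp add: linear_sum[OF \<phi>lin] linear_scale[OF \<phi>lin] mult.assoc)
    also have "\<dots> = 0"
    proof (intro sum.neutral ballI)
      fix i assume "i \<in> {..n}"
      then have i: "i \<le> n" by simp
      have nf: "(u i t x *\<^sub>R v i t x) \<bullet> \<nu> x = 0" by (rule no_flux[OF i t x])
      have "grad \<phi> x \<noteq> 0" "\<nu> x = (1 / norm (grad \<phi> x)) *\<^sub>R grad \<phi> x" using \<phi>(3)[OF x] by auto
      then have "(u i t x *\<^sub>R v i t x) \<bullet> grad \<phi> x = 0" using nf by (simp add: inner_scaleR_right)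
      then show "qf i x * D\<phi> x (u i t x *\<^sub>R v i t x) = 0" by (simp add: Dinner inner_commute)
    qed
    finally show ?thesis .
  qed
  have divz: "((\<lambda>x. \<Sum>k\<in>UNIV. DG x (axis k 1) $ k) has_integral 0) \<Omega>"
    by (rule div_zero[OF \<phi>(2) dom(3) \<phi>d \<phi>dc nz Ux_open clU Gd DGc tang])
  define P where "P x = - (1/4) * (\<Sum>i\<le>n. \<Sum>j\<le>n. k i j * u i t x * u j t x * (norm (v i t x - v j t x))\<^sup>2)" for x
  have pointwise: "Ft t x = P x - (\<Sum>k\<in>UNIV. DG x (axis k 1) $ k)" if x: "x \<in> \<Omega>" for x
  proof -
    have xU: "x \<in> Ux" using x \<Omega>U by auto
    have xtU: "(t, x) \<in> U" using inU[OF xU] .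
    define g where "g i = grad (u i t) x" for i
    define Q where "Q i = (\<Sum>l\<le>n. q i l *\<^sub>R g l)" for i
    have g_comp: "g i $ k = du i x (axis k 1)" if "i \<le> n" for i k
      using grad_eq[OF uxd[OF that xU]] by (simp add: g_def)
    have Q_comp: "Q i $ k = (\<Sum>l\<le>n. q i l * du l x (axis k 1))" for i k
      unfolding Q_def sum_component by (intro sum.cong refl) (simp add: g_comp)
    have grad_prod: "grad (\<lambda>y. u i t y * (\<Sum>l\<le>n. q i l * u l t y)) x = u i t x *\<^sub>R Q i + qf i x *\<^sub>R g i"
      if i: "i \<le> n" for i
    proof -
      have "((\<lambda>y. u i t y * qf i y) has_derivative
          (\<lambda>h. u i t x * (\<Sum>l\<le>n. q i l * du l x h) + du i x h * qf i x)) (at x)"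
        by (rule has_derivative_mult[OF uxd[OF i xU] qfd[OF xU]])
      then have "grad (\<lambda>y. u i t y * (\<Sum>l\<le>n. q i l * u l t y)) x
          = (\<chi> k. u i t x * (\<Sum>l\<le>n. q i l * du l x (axis k 1)) + du i x (axis k 1) * qf i x)"
        unfolding qf_def by (rule grad_eq)
      then show ?thesis by (simp add: vec_eq_iff Q_comp g_comp[OF i])
    qed
    have r_q: "(\<Sum>l\<le>n. r i l * f l) = (\<Sum>l\<le>n. q i l * f l)" if "i \<le> n" for i and f :: "nat \<Rightarrow> real"
      by (intro sum.cong refl) (simp add: r_eq_q that)
    have grad_r: "grad (\<lambda>y. \<Sum>l\<le>n. r i l * u l t y) x = Q i" if i: "i \<le> n" for i
    proof -
      have "(\<lambda>y. \<Sum>l\<le>n. r i l * u l t y) = qf i" using r_q[OF i] by (simp add: qf_def fun_eq_iff)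
      moreover have "grad (qf i) x = (\<chi> k. \<Sum>l\<le>n. q i l * du l x (axis k 1))" by (rule grad_eq[OF qfd[OF xU]])
      ultimately show ?thesis by (simp add: vec_eq_iff Q_comp)
    qed
    have rsum: "(\<Sum>l\<le>n. r i l * u l t x) = qf i x" if "i \<le> n" for i
      using r_q[OF that] by (simp add: qf_def)
    define W where "W = (\<Sum>j\<le>n. u j t x *\<^sub>R Q j)"
    have mom: "(\<Sum>j\<le>n. (k i j * u i t x * u j t x) *\<^sub>R (v i t x - v j t x)) = u i t x *\<^sub>R (W - Q i) + u i t x *\<^sub>R (W - Q i)"
      if i: "i \<le> n" for i
    proof -
      have s1: "(\<Sum>j\<le>n. grad (\<lambda>y. u j t y * (\<Sum>l\<le>n. q j l * u l t y)) x) = (\<Sum>j\<le>n. u j t x *\<^sub>R Q j + qf j x *\<^sub>R g j)"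
        by (intro sum.cong refl) (simp add: grad_prod)
      have s2: "(\<Sum>j\<le>n. (\<Sum>l\<le>n. r j l * u l t x) *\<^sub>R g j - u j t x *\<^sub>R grad (\<lambda>y. \<Sum>l\<le>n. r j l * u l t y) x)
          = (\<Sum>j\<le>n. qf j x *\<^sub>R g j - u j t x *\<^sub>R Q j)"
        by (intro sum.cong refl) (simp add: rsum grad_r)
      have m: "(\<Sum>j\<le>n. (k i j * u i t x * u j t x) *\<^sub>R (v i t x - v j t x))
          = - ((u i t x *\<^sub>R Q i + qf i x *\<^sub>R g i) - u i t x *\<^sub>R (\<Sum>j\<le>n. u j t x *\<^sub>R Q j + qf j x *\<^sub>R g j))
            + ((qf i x *\<^sub>R g i - u i t x *\<^sub>R Q i) - u i t x *\<^sub>R (\<Sum>j\<le>n. qf j x *\<^sub>R g j - u j t x *\<^sub>R Q j))"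
        using momentum[OF i t x] by (simp only: s1 s2 grad_prod[OF i] rsum[OF i] grad_r[OF i] g_def[symmetric])
      also have "\<dots> = u i t x *\<^sub>R (W - Q i) + u i t x *\<^sub>R (W - Q i)"
        unfolding W_def by (rule rhs_simp[where U="\<lambda>j. u j t x" and qf="\<lambda>j. qf j x"])
      finally show ?thesis .
    qed
    have E: "(\<Sum>i\<le>n. u i t x * (v i t x \<bullet> Q i)) = P x"
      unfolding P_def
      by (rule energy_identity[where U="\<lambda>i. u i t x" and V="\<lambda>i. v i t x", OF k_sym sum_flux[OF t x] mom])
    have dv: "divergence (\<lambda>y. u i t y *\<^sub>R v i t y) x
        = (\<Sum>k\<in>UNIV. (u i t x *\<^sub>R dvv i x (axis k 1) + du i x (axis k 1) *\<^sub>R v i t x) $ k)" if i: "i \<le> n" for i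
      by (rule div_eq[OF has_derivative_scaleR[OF uxd[OF i xU] vxd[OF i xU]]])
    have utd: "Du i (t, x) (1, 0) = - divergence (\<lambda>y. u i t y *\<^sub>R v i t y) x" if i: "i \<le> n" for i
    proof -
      have "deriv (\<lambda>s. u i s x) t = Du i (t, x) (1, 0)" by (rule DERIV_imp_deriv[OF ut[OF i xtU]])
      then show ?thesis using mass[OF i t x] by simp
    qed
    define a where "a i = Du i (t, x) (1, 0)" for i
    have Ft_eq: "Ft t x = (\<Sum>i\<le>n. a i * qf i x)"
    proof -
      have "Ft t x = (1/2) * ((\<Sum>i\<le>n. \<Sum>j\<le>n. q i j * (a i * u j t x)) + (\<Sum>i\<le>n. \<Sum>j\<le>n. q i j * (u i t x * a j)))"
        by (simp add: Ft_def Ftp_def fu_def a_def sum.distrib distrib_left)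
      also have "(\<Sum>i\<le>n. \<Sum>j\<le>n. q i j * (u i t x * a j)) = (\<Sum>i\<le>n. \<Sum>j\<le>n. q i j * (a i * u j t x))"
      proof -
        have "(\<Sum>i\<le>n. \<Sum>j\<le>n. q i j * (u i t x * a j)) = (\<Sum>j\<le>n. \<Sum>i\<le>n. q i j * (u i t x * a j))"
          by (rule sum.swap)
        also have "\<dots> = (\<Sum>i\<le>n. \<Sum>j\<le>n. q i j * (a i * u j t x))"
          by (intro sum.cong refl) (simp add: q_sym mult.commute)
        finally show ?thesis .
      qed
      also have "(\<Sum>i\<le>n. \<Sum>j\<le>n. q i j * (a i * u j t x)) = (\<Sum>i\<le>n. a i * qf i x)"
        by (intro sum.cong refl) (simp add: qf_def sum_distrib_left algebra_simps)
      finally show ?thesis by simp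
    qed
    have divG: "(\<Sum>k\<in>UNIV. DG x (axis k 1) $ k)
        = (\<Sum>i\<le>n. qf i x * divergence (\<lambda>y. u i t y *\<^sub>R v i t y) x + u i t x * (v i t x \<bullet> Q i))"
    proof -
      have "(\<Sum>k\<in>UNIV. DG x (axis k 1) $ k) = (\<Sum>k\<in>UNIV. \<Sum>i\<le>n.
          qf i x * (u i t x *\<^sub>R dvv i x (axis k 1) + du i x (axis k 1) *\<^sub>R v i t x) $ k
          + (\<Sum>l\<le>n. q i l * du l x (axis k 1)) * u i t x * v i t x $ k)"
        by (intro sum.cong refl) (simp add: DG_def)
      also have "\<dots> = (\<Sum>i\<le>n. \<Sum>k\<in>UNIV.
          qf i x * (u i t x *\<^sub>R dvv i x (axis k 1) + du i x (axis k 1) *\<^sub>R v i t x) $ k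
          + (\<Sum>l\<le>n. q i l * du l x (axis k 1)) * u i t x * v i t x $ k)"
        by (rule sum.swap)
      also have "\<dots> = (\<Sum>i\<le>n. qf i x * divergence (\<lambda>y. u i t y *\<^sub>R v i t y) x + u i t x * (v i t x \<bullet> Q i))"
      proof (intro sum.cong refl)
        fix i assume "i \<in> {..n}"
        then have i: "i \<le> n" by simp
        have e1: "(\<Sum>k\<in>UNIV. qf i x * (u i t x *\<^sub>R dvv i x (axis k 1) + du i x (axis k 1) *\<^sub>R v i t x) $ k)
            = qf i x * divergence (\<lambda>y. u i t y *\<^sub>R v i t y) x"
          by (simp only: dv[OF i] sum_distrib_left)
        have e2: "(\<Sum>k\<in>UNIV. (\<Sum>l\<le>n. q i l * du l x (axis k 1)) * u i t x * v i t x $ k)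
            = u i t x * (v i t x \<bullet> Q i)"
          by (simp add: inner_vec_def Q_comp sum_distrib_left algebra_simps)
        show "(\<Sum>k\<in>UNIV. qf i x * (u i t x *\<^sub>R dvv i x (axis k 1) + du i x (axis k 1) *\<^sub>R v i t x) $ k
            + (\<Sum>l\<le>n. q i l * du l x (axis k 1)) * u i t x * v i t x $ k)
            = qf i x * divergence (\<lambda>y. u i t y *\<^sub>R v i t y) x + u i t x * (v i t x \<bullet> Q i)"
          by (simp only: sum.distrib e1 e2)
      qed
      finally show ?thesis .
    qed
    have "(\<Sum>i\<le>n. a i * qf i x) = (\<Sum>i\<le>n. - (qf i x * divergence (\<lambda>y. u i t y *\<^sub>R v i t y) x))"
      by (intro sum.cong refl) (simp add: a_def utd)
    also have "\<dots> = (\<Sum>i\<le>n. u i t x * (v i t x \<bullet> Q i))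
        - (\<Sum>i\<le>n. qf i x * divergence (\<lambda>y. u i t y *\<^sub>R v i t y) x + u i t x * (v i t x \<bullet> Q i))"
      by (simp add: sum.distrib sum_negf)
    finally show ?thesis unfolding Ft_eq divG E .
  qed
  have Pint: "(\<lambda>x. k i j * u i t x * u j t x * (norm (v i t x - v j t x))\<^sup>2) integrable_on \<Omega>"
    if "i \<le> n" "j \<le> n" for i j
    by (rule cont_integrable[OF _ ccl closure_subset \<Omega>leb])
       (intro continuous_intros continuous_on_subset[OF uxc clU] continuous_on_subset[OF vxc clU] that)
  have I1: "integral \<Omega> (Ft t) = integral \<Omega> (\<lambda>x. P x - (\<Sum>k\<in>UNIV. DG x (axis k 1) $ k))"
    by (rule integral_cong) (use pointwise in auto)
  have PI: "integral \<Omega> P = - (1/4) * (\<Sum>i\<le>n. \<Sum>j\<le>n. integral \<Omega> (\<lambda>x. k i j * u i t x * u j t x * (norm (v i t x - v j t x))\<^sup>2))"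
  proof -
    have "integral \<Omega> (\<lambda>x. \<Sum>i\<le>n. \<Sum>j\<le>n. k i j * u i t x * u j t x * (norm (v i t x - v j t x))\<^sup>2)
        = (\<Sum>i\<le>n. integral \<Omega> (\<lambda>x. \<Sum>j\<le>n. k i j * u i t x * u j t x * (norm (v i t x - v j t x))\<^sup>2))"
      by (rule integral_sum) (auto intro!: integrable_sum Pint)
    also have "\<dots> = (\<Sum>i\<le>n. \<Sum>j\<le>n. integral \<Omega> (\<lambda>x. k i j * u i t x * u j t x * (norm (v i t x - v j t x))\<^sup>2))"
      by (intro sum.cong refl integral_sum) (auto intro!: Pint)
    finally show ?thesis by (simp add: P_def[abs_def])
  qed
  have Pi: "P integrable_on \<Omega>"
    unfolding P_def[abs_def] by (intro integrable_on_mult_right integrable_sum Pint) auto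
  have I: "integral \<Omega> (Ft t) = - (1/4) * (\<Sum>i\<le>n. \<Sum>j\<le>n. integral \<Omega> (\<lambda>x. k i j * u i t x * u j t x * (norm (v i t x - v j t x))\<^sup>2))"
    unfolding I1 using integral_diff[OF Pi has_integral_integrable[OF divz]] integral_unique[OF divz] PI by simp
  show ?thesis using D unfolding I by (simp add: F_def[abs_def])
  qed
qed

end
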